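(* Fix a vertex $v\in\mathbb{Z}_n$. For $M,N\in\operatorname{CM}(A)$ there is a short exact sequence of $\mathbb{C}$-vector spaces $$0\to K_v(M,N)\to\operatorname{Hom}_A(M,\omega N)\to\operatorname{Ext}^1_A(M,N)\to 0,$$ where the second map is the connecting homomorphism of the sequence $0\to N\to J_vN\to\omega N\to0$.
   Context: Fix integers $1\le m<n$. Let $Q$ be the quiver with vertex set $\mathbb{Z}_n$ and arrows $x_a\colon a-1\to a$ and $y_a\colon a\to a-1$ for $a\in\{1,\dots,n\}$. Let $A$ be the quotient of the complete path algebra $\widehat{\mathbb{C}Q}$ by the relations $xy=yx$ and $x^m=y^{n-m}$ at every vertex; its centre is $Z=\mathbb{C}[[t]]$, $t=xy$, and $e_j$ denotes the primitive idempotent at vertex $j$. $\operatorname{CM}(A)$ is the category of finitely generated $A$-modules that are free as $Z$-modules. For $N\in\operatorname{CM}(A)$, $J_vN:=\operatorname{Hom}_Z(e_vA,e_vN)$, the unit map $N\to J_vN$ is injective, and $\omega N$ denotes its (finite-dimensional) cokernel. $K_v(M,N)$ is the cokernel of the injective restriction map $\operatorname{Hom}_A(M,N)\to\operatorname{Hom}_Z(e_vM,e_vN)$. *)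

theory Defs
  imports Complex_Main "HOL-Computational_Algebra.Formal_Power_Series"
begin

section \<open>The complete path algebra of the cyclic double quiver on Z_n\<close>

text \<open>Vertices are integers 0..n-1 (representing Z_n). Arrow X = x_a : a-1 -> a
  (increments the vertex), arrow Y = y_a : a -> a-1 (decrements). A path is its start
  vertex together with the word of arrows in the order they are traversed.
  An element of the complete path algebra is an arbitrary (possibly infinite) formal
  combination of paths, i.e. a function from paths to complex numbers vanishing on
  paths with an invalid start vertex.\<close>

datatype arr = X | Y

type_synonym path = "int \<times> arr list"
type_synonym qel = "path \<Rightarrow> complex"

definition pend :: "nat \<Rightarrow> int \<Rightarrow> arr list \<Rightarrow> int" where
  "pend n s w = (s + int (length (filter (\<lambda>a. a = X) w))
                   - int (length (filter (\<lambda>a. a = Y) w))) mod int n"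

definition CQ :: "nat \<Rightarrow> qel set" where
  "CQ n = {f. \<forall>s w. \<not> (0 \<le> s \<and> s < int n) \<longrightarrow> f (s, w) = 0}"

text \<open>Algebra product f*g: first traverse (a path of) g, then (a path of) f.\<close>
definition qmul :: "nat \<Rightarrow> qel \<Rightarrow> qel \<Rightarrow> qel" where
  "qmul n f g = (\<lambda>(s, w). \<Sum>k\<in>{0..length w}. g (s, take k w) * f (pend n s (take k w), drop k w))"

definition qadd :: "qel \<Rightarrow> qel \<Rightarrow> qel" where
  "qadd f g = (\<lambda>p. f p + g p)"

definition qzero :: qel where "qzero = (\<lambda>p. 0)"

definition ev :: "int \<Rightarrow> qel" where
  "ev j = (\<lambda>p. if p = (j, []) then 1 else 0)"

definition qscal :: "nat \<Rightarrow> complex \<Rightarrow> qel" where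
  "qscal n c = (\<lambda>(s, w). if w = [] \<and> 0 \<le> s \<and> s < int n then c else 0)"

definition qone :: "nat \<Rightarrow> qel" where "qone n = qscal n 1"

text \<open>Relations at vertex j: e_j(xy - yx)e_j and e_j(x^m - y^(n-m))e_j.\<close>
definition rel1 :: "int \<Rightarrow> qel" where
  "rel1 j = (\<lambda>p. (if p = (j, [Y, X]) then 1 else 0) - (if p = (j, [X, Y]) then 1 else 0))"

definition rel2 :: "nat \<Rightarrow> nat \<Rightarrow> int \<Rightarrow> qel" where
  "rel2 n m j = (\<lambda>p. (if p = (j, replicate m X) then 1 else 0)
                   - (if p = (j, replicate (n - m) Y) then 1 else 0))"

inductive_set relI :: "nat \<Rightarrow> nat \<Rightarrow> qel set" for n m where
  relI_zero: "qzero \<in> relI n m"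
| relI_1: "\<lbrakk>a \<in> CQ n; b \<in> CQ n; 0 \<le> j; j < int n; c \<in> relI n m\<rbrakk>
            \<Longrightarrow> qadd (qmul n a (qmul n (rel1 j) b)) c \<in> relI n m"
| relI_2: "\<lbrakk>a \<in> CQ n; b \<in> CQ n; 0 \<le> j; j < int n; c \<in> relI n m\<rbrakk>
            \<Longrightarrow> qadd (qmul n a (qmul n (rel2 n m j) b)) c \<in> relI n m"

text \<open>Its closure in the arrow-ideal-adic topology; A = CQ / Ibar.\<close>
definition Ibar :: "nat \<Rightarrow> nat \<Rightarrow> qel set" where
  "Ibar n m = {f \<in> CQ n. \<forall>k. \<exists>g \<in> relI n m. \<forall>p. length (snd p) < k \<longrightarrow> f p = g p}"

text \<open>The element sum_k z_k t^k of the centre Z = C[[t]], where t = xy.\<close>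
definition zelt :: "nat \<Rightarrow> complex fps \<Rightarrow> qel" where
  "zelt n z = (\<lambda>(s, w). if 0 \<le> s \<and> s < int n \<and> w = concat (replicate (length w div 2) [Y, X])
                        then fps_nth z (length w div 2) else 0)"

record 'm amod =
  mcar :: "'m set"
  madd :: "'m \<Rightarrow> 'm \<Rightarrow> 'm"
  mzero :: "'m"
  mact :: "qel \<Rightarrow> 'm \<Rightarrow> 'm"

text \<open>A left A-module = a left module over the complete path algebra annihilated by Ibar.\<close>
definition is_mod :: "nat \<Rightarrow> nat \<Rightarrow> ('m, 'z) amod_scheme \<Rightarrow> bool" where
  "is_mod n m M \<longleftrightarrow>
     mzero M \<in> mcar M \<and>
     (\<forall>x\<in>mcar M. \<forall>y\<in>mcar M. madd M x y \<in> mcar M) \<and>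
     (\<forall>a\<in>CQ n. \<forall>x\<in>mcar M. mact M a x \<in> mcar M) \<and>
     (\<forall>x\<in>mcar M. \<forall>y\<in>mcar M. \<forall>z\<in>mcar M. madd M (madd M x y) z = madd M x (madd M y z)) \<and>
     (\<forall>x\<in>mcar M. \<forall>y\<in>mcar M. madd M x y = madd M y x) \<and>
     (\<forall>x\<in>mcar M. madd M (mzero M) x = x) \<and>
     (\<forall>x\<in>mcar M. \<exists>y\<in>mcar M. madd M x y = mzero M) \<and>
     (\<forall>a\<in>CQ n. \<forall>x\<in>mcar M. \<forall>y\<in>mcar M. mact M a (madd M x y) = madd M (mact M a x) (mact M a y)) \<and>
     (\<forall>a\<in>CQ n. \<forall>b\<in>CQ n. \<forall>x\<in>mcar M. mact M (qadd a b) x = madd M (mact M a x) (mact M b x)) \<and>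
     (\<forall>a\<in>CQ n. \<forall>b\<in>CQ n. \<forall>x\<in>mcar M. mact M (qmul n a b) x = mact M a (mact M b x)) \<and>
     (\<forall>x\<in>mcar M. mact M (qone n) x = x) \<and>
     (\<forall>a\<in>Ibar n m. \<forall>x\<in>mcar M. mact M a x = mzero M)"

definition msum :: "('m, 'z) amod_scheme \<Rightarrow> 'm list \<Rightarrow> 'm" where
  "msum M xs = foldr (madd M) xs (mzero M)"

definition fin_gen :: "nat \<Rightarrow> ('m, 'z) amod_scheme \<Rightarrow> bool" where
  "fin_gen n M \<longleftrightarrow> (\<exists>gs. set gs \<subseteq> mcar M \<and>
     (\<forall>x\<in>mcar M. \<exists>as. length as = length gs \<and> set as \<subseteq> CQ n \<and>
        x = msum M (map2 (mact M) as gs)))"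

definition Z_free :: "nat \<Rightarrow> ('m, 'z) amod_scheme \<Rightarrow> bool" where
  "Z_free n M \<longleftrightarrow> (\<exists>bs. distinct bs \<and> set bs \<subseteq> mcar M \<and>
     (\<forall>x\<in>mcar M. \<exists>zs. length zs = length bs \<and>
        x = msum M (map2 (\<lambda>z b. mact M (zelt n z) b) zs bs)) \<and>
     (\<forall>zs. length zs = length bs \<and> msum M (map2 (\<lambda>z b. mact M (zelt n z) b) zs bs) = mzero M
        \<longrightarrow> (\<forall>z\<in>set zs. z = 0)))"

definition CM :: "nat \<Rightarrow> nat \<Rightarrow> ('m, 'z) amod_scheme \<Rightarrow> bool" where
  "CM n m M \<longleftrightarrow> is_mod n m M \<and> fin_gen n M \<and> Z_free n M"

definition hom :: "nat \<Rightarrow> ('m, 'z) amod_scheme \<Rightarrow> ('k, 'y) amod_scheme \<Rightarrow> ('m \<Rightarrow> 'k) set" where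
  "hom n M N = {f. f \<in> extensional (mcar M) \<and> f ` mcar M \<subseteq> mcar N \<and>
     (\<forall>x\<in>mcar M. \<forall>y\<in>mcar M. f (madd M x y) = madd N (f x) (f y)) \<and>
     (\<forall>a\<in>CQ n. \<forall>x\<in>mcar M. f (mact M a x) = mact N a (f x))}"

definition eV :: "('m, 'z) amod_scheme \<Rightarrow> int \<Rightarrow> 'm set" where
  "eV M v = mact M (ev v) ` mcar M"

definition homZ :: "nat \<Rightarrow> int \<Rightarrow> ('m, 'z) amod_scheme \<Rightarrow> ('k, 'y) amod_scheme \<Rightarrow> ('m \<Rightarrow> 'k) set" where
  "homZ n v M N = {h. h \<in> extensional (eV M v) \<and> h ` eV M v \<subseteq> eV N v \<and>
     (\<forall>x\<in>eV M v. \<forall>y\<in>eV M v. h (madd M x y) = madd N (h x) (h y)) \<and>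
     (\<forall>z. \<forall>x\<in>eV M v. h (mact M (zelt n z) x) = mact N (zelt n z) (h x))}"

text \<open>Restriction map Hom_A(M,N) -> Hom_Z(e_v M, e_v N); K_v(M,N) is its cokernel.\<close>
definition resv :: "int \<Rightarrow> ('m, 'z) amod_scheme \<Rightarrow> ('m \<Rightarrow> 'k) \<Rightarrow> ('m \<Rightarrow> 'k)" where
  "resv v M f = restrict f (eV M v)"

text \<open>e_v A, represented inside the path algebra (A-classes of its elements).\<close>
definition eA :: "nat \<Rightarrow> int \<Rightarrow> qel set" where
  "eA n v = {qmul n (ev v) b | b. b \<in> CQ n}"

text \<open>J_v N = Hom_Z(e_v A, e_v N) with (a.phi)(b) = phi(b a). A Z-linear map on
  e_v A = e_v CQ / e_v Ibar is a Z-linear map on e_v CQ vanishing on e_v CQ \<inter> Ibar.\<close>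
definition Jmod :: "nat \<Rightarrow> nat \<Rightarrow> int \<Rightarrow> ('k, 'y) amod_scheme \<Rightarrow> (qel \<Rightarrow> 'k) amod" where
  "Jmod n m v N = \<lparr>
     mcar = {\<phi>. \<phi> \<in> extensional (eA n v) \<and> \<phi> ` eA n v \<subseteq> eV N v \<and>
        (\<forall>b\<in>eA n v. \<forall>c\<in>eA n v. \<phi> (qadd b c) = madd N (\<phi> b) (\<phi> c)) \<and>
        (\<forall>z. \<forall>b\<in>eA n v. \<phi> (qmul n (zelt n z) b) = mact N (zelt n z) (\<phi> b)) \<and>
        (\<forall>b\<in>eA n v \<inter> Ibar n m. \<phi> b = mzero N)},
     madd = (\<lambda>\<phi> \<psi>. restrict (\<lambda>b. madd N (\<phi> b) (\<psi> b)) (eA n v)),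
     mzero = restrict (\<lambda>b. mzero N) (eA n v),
     mact = (\<lambda>a \<phi>. restrict (\<lambda>b. \<phi> (qmul n b a)) (eA n v)) \<rparr>"

definition unitJ :: "nat \<Rightarrow> int \<Rightarrow> ('k, 'y) amod_scheme \<Rightarrow> 'k \<Rightarrow> (qel \<Rightarrow> 'k)" where
  "unitJ n v N x = restrict (\<lambda>b. mact N b x) (eA n v)"

definition coset :: "('m, 'z) amod_scheme \<Rightarrow> 'm set \<Rightarrow> 'm \<Rightarrow> 'm set" where
  "coset M S x = {madd M x s | s. s \<in> S}"

definition quotmod :: "('m, 'z) amod_scheme \<Rightarrow> 'm set \<Rightarrow> 'm set amod" where
  "quotmod M S = \<lparr>
     mcar = coset M S ` mcar M,
     madd = (\<lambda>P Q. coset M S (madd M (SOME x. x \<in> P) (SOME y. y \<in> Q))),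
     mzero = coset M S (mzero M),
     mact = (\<lambda>a P. coset M S (mact M a (SOME x. x \<in> P))) \<rparr>"

definition omega :: "nat \<Rightarrow> nat \<Rightarrow> int \<Rightarrow> ('k, 'y) amod_scheme \<Rightarrow> (qel \<Rightarrow> 'k) set amod" where
  "omega n m v N = quotmod (Jmod n m v N) (unitJ n v N ` mcar N)"

text \<open>Every extension 0 -> N -> E -> M -> 0 is isomorphic (as an extension) to one whose
  underlying set is N x M with inclusion x |-> (x,0) and projection (x,y) |-> y.\<close>
definition ext_inc :: "('m, 'z) amod_scheme \<Rightarrow> ('k, 'y) amod_scheme \<Rightarrow> 'k \<Rightarrow> 'k \<times> 'm" where
  "ext_inc M N = restrict (\<lambda>x. (x, mzero M)) (mcar N)"

definition ext_proj :: "('m, 'z) amod_scheme \<Rightarrow> ('k, 'y) amod_scheme \<Rightarrow> 'k \<times> 'm \<Rightarrow> 'm" where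
  "ext_proj M N = restrict snd (mcar N \<times> mcar M)"

definition is_ext :: "nat \<Rightarrow> nat \<Rightarrow> ('m, 'z) amod_scheme \<Rightarrow> ('k, 'y) amod_scheme \<Rightarrow> ('k \<times> 'm) amod \<Rightarrow> bool" where
  "is_ext n m M N E \<longleftrightarrow> mcar E = mcar N \<times> mcar M \<and> is_mod n m E \<and>
     ext_inc M N \<in> hom n N E \<and> ext_proj M N \<in> hom n E M"

text \<open>The class of E is zero in Ext^1_A(M,N) iff E splits.\<close>
definition ext_splits :: "nat \<Rightarrow> ('m, 'z) amod_scheme \<Rightarrow> ('k, 'y) amod_scheme \<Rightarrow> ('k \<times> 'm) amod \<Rightarrow> bool" where
  "ext_splits n M N E \<longleftrightarrow> (\<exists>s\<in>hom n M E. \<forall>y\<in>mcar M. ext_proj M N (s y) = y)"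

text \<open>E represents delta(f), the image of f : M -> omega N under the connecting
  homomorphism of 0 -> N -> J_v N -> omega N -> 0, i.e. the pullback of that sequence
  along f: there is a morphism of extensions from E to that sequence lying over f.\<close>
definition represents_delta :: "nat \<Rightarrow> nat \<Rightarrow> int \<Rightarrow> ('m, 'z) amod_scheme \<Rightarrow> ('k, 'y) amod_scheme
    \<Rightarrow> ('k \<times> 'm) amod \<Rightarrow> ('m \<Rightarrow> (qel \<Rightarrow> 'k) set) \<Rightarrow> bool" where
  "represents_delta n m v M N E f \<longleftrightarrow>
     (\<exists>g\<in>hom n E (Jmod n m v N).
        (\<forall>x\<in>mcar N. g (x, mzero M) = unitJ n v N x) \<and>
        (\<forall>x\<in>mcar N. \<forall>y\<in>mcar M. g (x, y) \<in> f y))"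

definition homZ_lc :: "nat \<Rightarrow> int \<Rightarrow> ('m, 'z) amod_scheme \<Rightarrow> ('k, 'y) amod_scheme
    \<Rightarrow> complex \<Rightarrow> ('m \<Rightarrow> 'k) \<Rightarrow> ('m \<Rightarrow> 'k) \<Rightarrow> ('m \<Rightarrow> 'k)" where
  "homZ_lc n v M N c h h' = restrict (\<lambda>x. madd N (mact N (qscal n c) (h x)) (h' x)) (eV M v)"

definition hom_lc :: "nat \<Rightarrow> ('m, 'z) amod_scheme \<Rightarrow> ('k, 'y) amod_scheme
    \<Rightarrow> complex \<Rightarrow> ('m \<Rightarrow> 'k) \<Rightarrow> ('m \<Rightarrow> 'k) \<Rightarrow> ('m \<Rightarrow> 'k)" where
  "hom_lc n M T c f g = restrict (\<lambda>x. madd T (mact T (qscal n c) (f x)) (g x)) (mcar M)"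

definition hom_zero :: "('m, 'z) amod_scheme \<Rightarrow> ('k, 'y) amod_scheme \<Rightarrow> ('m \<Rightarrow> 'k)" where
  "hom_zero M T = restrict (\<lambda>x. mzero T) (mcar M)"

end

theory Submission
  imports Defs
begin


lemma pend_range: "0 < n \<Longrightarrow> 0 \<le> pend n s w \<and> pend n s w < int n"
  by (simp add: pend_def)

lemma pend_append: "pend n s (u @ w) = pend n (pend n s u) w"
proof -
  have h: "\<And>x c d k::int. (c + x mod k - d) mod k = (c + x - d) mod k"
    by (metis mod_add_right_eq mod_diff_left_eq)
  show ?thesis unfolding pend_def by (simp add: h algebra_simps)
qed

lemma pend_nil: "0 \<le> s \<Longrightarrow> s < int n \<Longrightarrow> pend n s [] = s"
  by (simp add: pend_def)

definition qmono :: "int \<Rightarrow> arr list \<Rightarrow> qel" where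
  "qmono s w = (\<lambda>p. if p = (s, w) then 1 else 0)"

lemma ev_mono: "ev j = qmono j []" by (simp add: ev_def qmono_def)

lemma mono_CQ: "0 \<le> s \<Longrightarrow> s < int n \<Longrightarrow> qmono s w \<in> CQ n"
  by (auto simp: CQ_def qmono_def)

lemma ev_CQ: "0 \<le> s \<Longrightarrow> s < int n \<Longrightarrow> ev s \<in> CQ n"
  by (simp add: ev_mono mono_CQ)

lemma qscal_CQ: "qscal n c \<in> CQ n" by (auto simp: CQ_def qscal_def)
lemma qzero_CQ: "qzero \<in> CQ n" by (auto simp: CQ_def qzero_def)
lemma qone_CQ: "qone n \<in> CQ n" by (simp add: qone_def qscal_CQ)
lemma zelt_CQ: "zelt n z \<in> CQ n" by (auto simp: CQ_def zelt_def)
lemma rel1_CQ: "0 \<le> j \<Longrightarrow> j < int n \<Longrightarrow> rel1 j \<in> CQ n" by (auto simp: CQ_def rel1_def)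
lemma qadd_CQ: "a \<in> CQ n \<Longrightarrow> b \<in> CQ n \<Longrightarrow> qadd a b \<in> CQ n" by (auto simp: CQ_def qadd_def)

lemma qmul_CQ: "b \<in> CQ n \<Longrightarrow> qmul n a b \<in> CQ n"
  by (auto simp: CQ_def qmul_def)

lemma qmul_ev_left: "qmul n (ev v) b (s, w) = (if pend n s w = v then b (s, w) else 0)"
proof -
  have "qmul n (ev v) b (s, w) = (\<Sum>k\<in>{0..length w}. if k = length w then b (s, w) * (if pend n s w = v then 1 else 0) else 0)"
    unfolding qmul_def ev_def prod.case by (intro sum.cong) auto
  also have "\<dots> = b (s, w) * (if pend n s w = v then 1 else 0)" by simp
  finally show ?thesis by simp
qed

definition eAc :: "nat \<Rightarrow> int \<Rightarrow> qel set" where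
  "eAc n v = {f \<in> CQ n. \<forall>s w. pend n s w \<noteq> v \<longrightarrow> f (s, w) = 0}"

lemma eA_char: "eA n v = eAc n v"
proof
  show "eA n v \<subseteq> eAc n v"
    by (auto simp: eA_def eAc_def qmul_ev_left qmul_CQ)
  show "eAc n v \<subseteq> eA n v"
  proof
    fix f assume f: "f \<in> eAc n v"
    have "qmul n (ev v) f = f" using f by (auto simp: qmul_ev_left eAc_def)
    thus "f \<in> eA n v" using f unfolding eA_def eAc_def by (intro CollectI exI[of _ f]) auto
  qed
qed

lemma qmul_ev_eA: "b \<in> eA n v \<Longrightarrow> qmul n (ev v) b = b"
  by (auto simp: eA_char eAc_def qmul_ev_left)

lemma eA_CQ: "b \<in> eA n v \<Longrightarrow> b \<in> CQ n" by (simp add: eA_char eAc_def)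

lemma ev_eA: "0 < n \<Longrightarrow> 0 \<le> v \<Longrightarrow> v < int n \<Longrightarrow> ev v \<in> eA n v"
  using ev_CQ[of v n] by (auto simp: eA_char eAc_def ev_def pend_def)

lemma qmul_right_eA: assumes "b \<in> eA n v" "a \<in> CQ n" shows "qmul n b a \<in> eA n v"
proof -
  have b: "b \<in> CQ n" "\<And>s w. pend n s w \<noteq> v \<Longrightarrow> b (s, w) = 0" using assms(1) by (auto simp: eA_char eAc_def)
  have "qmul n b a (s, w) = 0" if "pend n s w \<noteq> v" for s w
  proof -
    have "\<And>k. b (pend n s (take k w), drop k w) = 0"
      using b(2) that by (metis append_take_drop_id pend_append)
    thus ?thesis by (simp add: qmul_def)
  qed
  thus ?thesis using qmul_CQ[OF assms(2)] by (auto simp: eA_char eAc_def)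
qed




lemma take_drop_iff: "k \<le> length w \<Longrightarrow> (take k w = w1 \<and> drop k w = w2) \<longleftrightarrow> (k = length w1 \<and> w = w1 @ w2)"
proof
  assume k: "k \<le> length w" and h: "take k w = w1 \<and> drop k w = w2"
  show "k = length w1 \<and> w = w1 @ w2" using k h by auto
next
  assume k: "k \<le> length w" and h: "k = length w1 \<and> w = w1 @ w2"
  show "take k w = w1 \<and> drop k w = w2" using h by auto
qed

lemma qmul_mono: assumes "0 \<le> s" "s < int n"
  shows "qmul n (qmono t w2) (qmono s w1) = (if pend n s w1 = t then qmono s (w1 @ w2) else qzero)"
proof (rule ext, clarify)
  fix s' w
  have sm: "qmono s w1 (s', take k w) * qmono t w2 (pend n s' (take k w), drop k w) =
     (if k = length w1 then (if s' = s \<and> w = w1 @ w2 \<and> pend n s w1 = t then 1 else 0) else 0)"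
    if k: "k \<in> {0..length w}" for k
  proof (cases "take k w = w1 \<and> drop k w = w2")
    case True
    then have "k = length w1 \<and> w = w1 @ w2" using take_drop_iff[of k w w1 w2] k by auto
    thus ?thesis using True unfolding qmono_def by auto
  next
    case False
    have kle: "k \<le> length w" using k by simp
    have "\<not> (k = length w1 \<and> w = w1 @ w2)" using take_drop_iff[OF kle, of w1 w2] False by blast
    thus ?thesis using False unfolding qmono_def by auto
  qed
  have "qmul n (qmono t w2) (qmono s w1) (s', w) =
     (\<Sum>k\<in>{0..length w}. if k = length w1 then (if s' = s \<and> w = w1 @ w2 \<and> pend n s w1 = t then 1 else 0) else 0)"
    unfolding qmul_def prod.case by (rule sum.cong[OF refl sm])
  also have "\<dots> = (if s' = s \<and> w = w1 @ w2 \<and> pend n s w1 = t then 1 else 0)"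
    by auto
  finally show "qmul n (qmono t w2) (qmono s w1) (s', w) = (if pend n s w1 = t then qmono s (w1 @ w2) else qzero) (s', w)"
    by (auto simp: qmono_def qzero_def)
qed

lemma qmul_one_left: assumes "0 < n" shows "qmul n (qone n) f = f"
proof (rule ext, clarify)
  fix s w
  have "qmul n (qone n) f (s, w) = (\<Sum>k\<in>{0..length w}. if k = length w then f (s, w) else 0)"
    unfolding qmul_def prod.case qone_def qscal_def using pend_range[OF assms]
    by (intro sum.cong refl) auto
  thus "qmul n (qone n) f (s, w) = f (s, w)" by simp
qed

lemma qmul_one_right: assumes "f \<in> CQ n" shows "qmul n f (qone n) = f"
proof (rule ext, clarify)
  fix s w
  have "qmul n f (qone n) (s, w) = (\<Sum>k\<in>{0..length w}. if k = 0 then f (s, w) else 0)"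
    unfolding qmul_def prod.case qone_def qscal_def using assms
    by (intro sum.cong refl) (auto simp: pend_nil CQ_def)
  thus "qmul n f (qone n) (s, w) = f (s, w)" by simp
qed

lemma relI_Ibar: "f \<in> relI n m \<Longrightarrow> f \<in> CQ n \<Longrightarrow> f \<in> Ibar n m"
  unfolding Ibar_def by blast

lemma qadd_qzero: "qadd f qzero = f" by (simp add: qadd_def qzero_def)

lemma rel1_Ibar: assumes "0 < n" "0 \<le> j" "j < int n" shows "rel1 j \<in> Ibar n m"
proof -
  have "qadd (qmul n (qone n) (qmul n (rel1 j) (qone n))) qzero \<in> relI n m"
    by (rule relI_1) (use assms in \<open>auto intro: qone_CQ relI_zero\<close>)
  also have "qadd (qmul n (qone n) (qmul n (rel1 j) (qone n))) qzero = rel1 j"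
    using assms by (simp add: qadd_qzero qmul_one_left qmul_one_right rel1_CQ)
  finally show ?thesis using assms by (intro relI_Ibar rel1_CQ)
qed

lemma qmul_qscal_right: assumes "b \<in> CQ n" shows "qmul n b (qscal n c) = (\<lambda>p. c * b p)"
proof (rule ext, clarify)
  fix s w
  have "qmul n b (qscal n c) (s, w) = (\<Sum>k\<in>{0..length w}. if k = 0 then c * b (s, w) else 0)"
    unfolding qmul_def prod.case qscal_def using assms
    by (intro sum.cong refl) (auto simp: pend_nil CQ_def)
  thus "qmul n b (qscal n c) (s, w) = c * b (s, w)" by simp
qed

lemma qmul_qscal_left: assumes "0 < n" shows "qmul n (qscal n c) b = (\<lambda>p. c * b p)"
proof (rule ext, clarify)
  fix s w
  have "qmul n (qscal n c) b (s, w) = (\<Sum>k\<in>{0..length w}. if k = length w then c * b (s, w) else 0)"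
    unfolding qmul_def prod.case qscal_def using pend_range[OF assms]
    by (intro sum.cong refl) auto
  thus "qmul n (qscal n c) b (s, w) = c * b (s, w)" by simp
qed

definition lw :: "nat \<Rightarrow> arr list" where "lw j = concat (replicate j [Y, X])"

lemma length_lw: "length (lw j) = 2 * j" by (induction j) (auto simp: lw_def)

lemma lw_add: "lw (i + j) = lw i @ lw j" by (simp add: lw_def replicate_add)

lemma lw_nil: "lw j = [] \<longleftrightarrow> j = 0" by (cases j) (auto simp: lw_def)

lemma zelt_lw: "zelt n z (s, lw j) = (if 0 \<le> s \<and> s < int n then fps_nth z j else 0)"
  by (simp add: zelt_def length_lw lw_def[symmetric])

lemma zelt_not: "(\<And>j. w \<noteq> lw j) \<Longrightarrow> zelt n z (s, w) = 0"
  by (auto simp: zelt_def lw_def)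

lemma zelt_cases: "zelt n z (s, w) \<noteq> 0 \<Longrightarrow> 0 \<le> s \<and> s < int n \<and> (\<exists>j. w = lw j)"
  by (auto simp: zelt_def lw_def split: if_splits)

lemma cnt_lw: "length (filter (\<lambda>a. a = X) (lw j)) = j" "length (filter (\<lambda>a. a = Y) (lw j)) = j"
  by (induction j) (auto simp: lw_def)

lemma pend_lw: "0 \<le> s \<Longrightarrow> s < int n \<Longrightarrow> pend n s (lw j) = s"
  by (simp add: pend_def cnt_lw)

lemma zelt_add: "zelt n (a + b) = qadd (zelt n a) (zelt n b)"
  by (auto simp: zelt_def qadd_def fun_eq_iff)

lemma zelt_zero: "zelt n 0 = qzero"
  by (auto simp: zelt_def qzero_def fun_eq_iff)

lemma zelt_const: "zelt n (fps_const c) = qscal n c"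
proof (rule ext, clarify)
  fix s w
  show "zelt n (fps_const c) (s, w) = qscal n c (s, w)"
  proof (cases "\<exists>j. w = lw j")
    case True
    then obtain j where "w = lw j" by blast
    thus ?thesis by (cases j) (auto simp: zelt_lw qscal_def lw_nil)
  next
    case False
    have "w \<noteq> []" using False lw_nil by metis
    thus ?thesis using zelt_not[of w] False by (auto simp: qscal_def)
  qed
qed

lemma even_sum_lemma:
  fixes K :: nat and F :: "nat \<Rightarrow> 'a::comm_monoid_add"
  shows "(\<forall>k. odd k \<longrightarrow> k \<le> 2*K \<longrightarrow> F k = 0) \<longrightarrow> (\<Sum>k\<in>{0..2*K}. F k) = (\<Sum>j\<in>{0..K}. F (2*j))"
proof (induction K)
  case 0 show ?case by simp
next
  case (Suc K)
  show ?case
  proof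
    assume h: "\<forall>k. odd k \<longrightarrow> k \<le> 2*Suc K \<longrightarrow> F k = 0"
    have "{0..2 * Suc K} = insert (2*K+2) (insert (2*K+1) {0..2*K})" by auto
    hence "(\<Sum>k\<in>{0..2*Suc K}. F k) = F (2*K+2) + F (2*K+1) + (\<Sum>k\<in>{0..2*K}. F k)" by (simp add: add.assoc)
    also have "F (2*K+1) = 0" using h by simp
    also have "(\<Sum>k\<in>{0..2*K}. F k) = (\<Sum>j\<in>{0..K}. F (2*j))" using Suc h by simp
    finally show "(\<Sum>k\<in>{0..2*Suc K}. F k) = (\<Sum>j\<in>{0..Suc K}. F (2*j))" by (simp add: ac_simps)
  qed
qed

lemma take_lw_odd: "odd k \<Longrightarrow> k \<le> 2*K \<Longrightarrow> take k (lw K) \<noteq> lw j"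
proof
  assume h: "odd k" "take k (lw K) = lw j" and kk: "k \<le> 2*K"
  have "length (take k (lw K)) = min k (2*K)" by (simp add: length_lw)
  hence "min k (2*K) = 2*j" using h(2) by (simp add: length_lw)
  thus False using h(1) kk by (auto simp: min_def)
qed

lemma zelt_mult: assumes "0 < n" shows "qmul n (zelt n a) (zelt n b) = zelt n (a * b)"
proof (rule ext, clarify)
  fix s w
  show "qmul n (zelt n a) (zelt n b) (s, w) = zelt n (a * b) (s, w)"
  proof (cases "(\<exists>j. w = lw j) \<and> 0 \<le> s \<and> s < int n")
    case True
    then obtain K where w: "w = lw K" and s: "0 \<le> s" "s < int n" by blast
    let ?F = "\<lambda>k. zelt n b (s, take k w) * zelt n a (pend n s (take k w), drop k w)"
    have odd0: "?F k = 0" if "odd k" "k \<le> 2*K" for k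
      using take_lw_odd[OF that] zelt_cases[of n b s "take k w"] w by auto
    have ev: "?F (2*j) = fps_nth b j * fps_nth a (K - j)" if "j \<in> {0..K}" for j
    proof -
      have "lw K = lw j @ lw (K - j)" using that lw_add[of j "K-j"] by simp
      hence t: "take (2*j) w = lw j" "drop (2*j) w = lw (K-j)" using w
        by (metis append_eq_conv_conj length_lw)+
      show ?thesis using s by (simp add: t zelt_lw pend_lw)
    qed
    have "qmul n (zelt n a) (zelt n b) (s, w) = (\<Sum>k\<in>{0..2*K}. ?F k)"
      by (simp add: qmul_def w length_lw)
    also have "\<dots> = (\<Sum>j\<in>{0..K}. ?F (2*j))" using even_sum_lemma[of K ?F] odd0 by blast
    also have "\<dots> = (\<Sum>j\<in>{0..K}. fps_nth b j * fps_nth a (K - j))" by (rule sum.cong) (auto simp: ev)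
    also have "\<dots> = fps_nth (b * a) K" by (simp add: fps_mult_nth)
    finally show ?thesis using s by (simp add: w zelt_lw mult.commute)
  next
    case False
    have "zelt n b (s, take k w) * zelt n a (pend n s (take k w), drop k w) = 0" for k
    proof (rule ccontr)
      assume "\<not> ?thesis"
      hence nz: "zelt n b (s, take k w) \<noteq> 0" "zelt n a (pend n s (take k w), drop k w) \<noteq> 0" by auto
      obtain i where "take k w = lw i" "0 \<le> s" "s < int n" using zelt_cases[OF nz(1)] by blast
      moreover obtain j where "drop k w = lw j" using zelt_cases[OF nz(2)] by blast
      ultimately have "take k w = lw i" "drop k w = lw j" "0 \<le> s" "s < int n" by auto
      hence "w = lw (i + j)" by (metis append_take_drop_id lw_add)
      thus False using False \<open>0 \<le> s\<close> \<open>s < int n\<close> by blast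
    qed
    moreover have "zelt n (a * b) (s, w) = 0" using False zelt_cases by blast
    ultimately show ?thesis by (auto simp: qmul_def intro!: sum.neutral)
  qed
qed

lemma zelt_ev_comm: assumes "0 < n" "0 \<le> v" "v < int n"
  shows "qmul n (zelt n z) (ev v) = qmul n (ev v) (zelt n z)"
proof (rule ext, clarify)
  fix s w
  have "qmul n (zelt n z) (ev v) (s, w) = (\<Sum>k\<in>{0..length w}. if k = 0 then (if s = v then zelt n z (v, w) else 0) else 0)"
    unfolding qmul_def prod.case ev_def using assms
    by (intro sum.cong refl) (auto simp: pend_nil)
  also have "\<dots> = (if s = v then zelt n z (v, w) else 0)" by simp
  also have "\<dots> = qmul n (ev v) (zelt n z) (s, w)"
    unfolding qmul_ev_left
  proof (cases "zelt n z (s, w) = 0")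
    case True thus "(if s = v then zelt n z (v, w) else 0) = (if pend n s w = v then zelt n z (s, w) else 0)" by auto
  next
    case False
    then obtain j where j: "0 \<le> s" "s < int n" "w = lw j" using zelt_cases by blast
    hence "pend n s w = s" by (simp add: pend_lw)
    thus "(if s = v then zelt n z (v, w) else 0) = (if pend n s w = v then zelt n z (s, w) else 0)" by simp
  qed
  finally show "qmul n (zelt n z) (ev v) (s, w) = qmul n (ev v) (zelt n z) (s, w)" .
qed

lemma zelt_eA: assumes "b \<in> eA n v" shows "qmul n (zelt n z) b \<in> eA n v"
proof -
  have b: "b \<in> CQ n" "\<And>s w. pend n s w \<noteq> v \<Longrightarrow> b (s, w) = 0" using assms by (auto simp: eA_char eAc_def)
  have "qmul n (zelt n z) b (s, w) = 0" if "pend n s w \<noteq> v" for s w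
  proof -
    have "b (s, take k w) * zelt n z (pend n s (take k w), drop k w) = 0" for k
    proof (rule ccontr)
      assume "\<not> ?thesis"
      then obtain j where j: "drop k w = lw j" "0 \<le> pend n s (take k w)" "pend n s (take k w) < int n"
        "b (s, take k w) \<noteq> 0"
        using zelt_cases[of n z "pend n s (take k w)" "drop k w"] by auto
      have "pend n s w = pend n (pend n s (take k w)) (drop k w)"
        using pend_append[of n s "take k w" "drop k w"] by simp
      also have "\<dots> = pend n s (take k w)" using j(1-3) by (simp add: pend_lw)
      finally have "pend n s w = pend n s (take k w)" .
      thus False using b(2)[of s "take k w"] j(4) that by simp
    qed
    thus ?thesis by (auto simp: qmul_def intro!: sum.neutral)
  qed
  thus ?thesis using qmul_CQ[OF b(1)] by (auto simp: eA_char eAc_def)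
qed




locale amodule =
  fixes n m :: nat and K :: "('a, 'b) amod_scheme"
  assumes ismod: "is_mod n m K" and npos: "0 < n"
begin

abbreviation "C \<equiv> mcar K"
abbreviation "add \<equiv> madd K"
abbreviation "zer \<equiv> mzero K"
abbreviation "act \<equiv> mact K"

lemma zero_closed[simp]: "zer \<in> C" using ismod[unfolded is_mod_def] by blast
lemma add_closed[simp]: "x \<in> C \<Longrightarrow> y \<in> C \<Longrightarrow> add x y \<in> C" using ismod[unfolded is_mod_def] by auto
lemma act_closed[simp]: "a \<in> CQ n \<Longrightarrow> x \<in> C \<Longrightarrow> act a x \<in> C" using ismod[unfolded is_mod_def] by auto
lemma add_assoc: "x \<in> C \<Longrightarrow> y \<in> C \<Longrightarrow> z \<in> C \<Longrightarrow> add (add x y) z = add x (add y z)"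
  using ismod[unfolded is_mod_def] by blast
lemma add_comm: "x \<in> C \<Longrightarrow> y \<in> C \<Longrightarrow> add x y = add y x" using ismod[unfolded is_mod_def] by blast
lemma lzero[simp]: "x \<in> C \<Longrightarrow> add zer x = x" using ismod[unfolded is_mod_def] by blast
lemma rzero[simp]: "x \<in> C \<Longrightarrow> add x zer = x" by (metis add_comm lzero zero_closed)
lemma neg_ex: "x \<in> C \<Longrightarrow> \<exists>y\<in>C. add x y = zer" using ismod[unfolded is_mod_def] by blast
lemma act_add: "a \<in> CQ n \<Longrightarrow> x \<in> C \<Longrightarrow> y \<in> C \<Longrightarrow> act a (add x y) = add (act a x) (act a y)"
  using ismod[unfolded is_mod_def] by blast
lemma act_qadd: "a \<in> CQ n \<Longrightarrow> b \<in> CQ n \<Longrightarrow> x \<in> C \<Longrightarrow> act (qadd a b) x = add (act a x) (act b x)"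
  using ismod[unfolded is_mod_def] by blast
lemma act_qmul: "a \<in> CQ n \<Longrightarrow> b \<in> CQ n \<Longrightarrow> x \<in> C \<Longrightarrow> act (qmul n a b) x = act a (act b x)"
  using ismod[unfolded is_mod_def] by blast
lemma act_one: "x \<in> C \<Longrightarrow> act (qone n) x = x" using ismod[unfolded is_mod_def] by blast
lemma act_Ibar: "a \<in> Ibar n m \<Longrightarrow> x \<in> C \<Longrightarrow> act a x = zer" using ismod[unfolded is_mod_def] by blast

lemma add_left_comm: "x \<in> C \<Longrightarrow> y \<in> C \<Longrightarrow> z \<in> C \<Longrightarrow> add x (add y z) = add y (add x z)"
  by (metis add_assoc add_comm)

lemma cancel: assumes "x \<in> C" "y \<in> C" "z \<in> C" "add x y = add x z" shows "y = z"
proof -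
  obtain x' where x': "x' \<in> C" "add x x' = zer" using neg_ex assms(1) by blast
  have "y = add (add x' x) y" using x' assms by (simp add: add_comm)
  also have "\<dots> = add x' (add x y)" using x' assms by (simp add: add_assoc)
  also have "\<dots> = add (add x' x) z" using x' assms by (simp add: add_assoc)
  also have "\<dots> = z" using x' assms by (simp add: add_comm)
  finally show ?thesis .
qed

lemma zero_unique: "x \<in> C \<Longrightarrow> y \<in> C \<Longrightarrow> add x y = x \<Longrightarrow> y = zer"
  using cancel[of x y zer] by simp

lemma act_zero[simp]: "a \<in> CQ n \<Longrightarrow> act a zer = zer"
  using zero_unique[of "act a zer" "act a zer"] act_add[of a zer zer] by simp

lemma act_qzero[simp]: "x \<in> C \<Longrightarrow> act qzero x = zer"
  using zero_unique[of "act qzero x" "act qzero x"] act_qadd[of qzero qzero x] qzero_CQ[of n]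
  by (simp add: qadd_qzero)

lemma act_zelt_add: "x \<in> C \<Longrightarrow> act (zelt n (a + b)) x = add (act (zelt n a) x) (act (zelt n b) x)"
  by (simp add: zelt_add act_qadd zelt_CQ)

lemma act_zelt_mult: "x \<in> C \<Longrightarrow> act (zelt n a) (act (zelt n b) x) = act (zelt n (a * b)) x"
  by (simp add: zelt_mult[OF npos] act_qmul[symmetric] zelt_CQ)

lemma act_zelt_zero[simp]: "x \<in> C \<Longrightarrow> act (zelt n 0) x = zer"
  by (simp add: zelt_zero)

definition comb :: "complex fps list \<Rightarrow> 'a list \<Rightarrow> 'a" where
  "comb zs ls = msum K (map2 (\<lambda>z b. act (zelt n z) b) zs ls)"

lemma comb_Nil[simp]: "comb [] ls = zer" "comb zs [] = zer"
  by (simp_all add: comb_def msum_def)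
lemma comb_Cons[simp]: "comb (z # zs) (l # ls) = add (act (zelt n z) l) (comb zs ls)"
  by (simp add: comb_def msum_def)

lemma comb_closed[simp]: "set ls \<subseteq> C \<Longrightarrow> comb zs ls \<in> C"
proof (induction ls arbitrary: zs)
  case Nil thus ?case by simp
next
  case (Cons l ls) thus ?case by (cases zs) (auto simp: zelt_CQ)
qed

lemma comb_add: "set ls \<subseteq> C \<Longrightarrow> length zs = length ls \<Longrightarrow> length zs' = length ls \<Longrightarrow>
  comb (map2 (+) zs zs') ls = add (comb zs ls) (comb zs' ls)"
proof (induction ls arbitrary: zs zs')
  case Nil thus ?case by simp
next
  case (Cons l ls)
  then obtain z zr z' zr' where zs: "zs = z # zr" "zs' = z' # zr'" by (metis length_Suc_conv)
  have c: "l \<in> C" "set ls \<subseteq> C" using Cons by auto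
  let ?a = "act (zelt n z) l" and ?b = "act (zelt n z') l" and ?c = "comb zr ls" and ?d = "comb zr' ls"
  have cl: "?a \<in> C" "?b \<in> C" "?c \<in> C" "?d \<in> C" using c by (auto simp: zelt_CQ)
  have "comb (map2 (+) zs zs') (l # ls) = add (add ?a ?b) (add ?c ?d)"
    using Cons zs c by (simp add: act_zelt_add)
  also have "\<dots> = add (add ?a ?c) (add ?b ?d)" using cl
    by (metis add_assoc add_closed add_left_comm)
  finally show ?case using zs by simp
qed

lemma comb_scale: "set ls \<subseteq> C \<Longrightarrow> comb (map (\<lambda>z. c * z) zs) ls = act (zelt n c) (comb zs ls)"
proof (induction ls arbitrary: zs)
  case Nil thus ?case by (simp add: zelt_CQ)
next
  case (Cons l ls) thus ?case
    by (cases zs) (auto simp: zelt_CQ act_add act_zelt_mult)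
qed

lemma comb_zeros: "set ls \<subseteq> C \<Longrightarrow> (\<forall>z\<in>set zs. z = 0) \<Longrightarrow> comb zs ls = zer"
proof (induction ls arbitrary: zs)
  case Nil thus ?case by simp
next
  case (Cons l ls) thus ?case by (cases zs) auto
qed

end

lemma hom_zero_pres:
  assumes "amodule n m K" "amodule n m K'" "f \<in> hom n K K'"
  shows "f (mzero K) = mzero K'"
proof -
  interpret A: amodule n m K by fact
  interpret B: amodule n m K' by fact
  have h0: "\<forall>x\<in>mcar K. \<forall>y\<in>mcar K. f (madd K x y) = madd K' (f x) (f y)"
    using assms(3) unfolding hom_def by blast
  have h: "f (madd K (mzero K) (mzero K)) = madd K' (f (mzero K)) (f (mzero K))"
    using h0 A.zero_closed by blast
  have c: "f (mzero K) \<in> mcar K'" using assms(3) unfolding hom_def by auto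
  show ?thesis using h c B.zero_unique[of "f (mzero K)" "f (mzero K)"] by simp
qed

lemma comb_hom:
  assumes "amodule n m K" "amodule n m K'" "f \<in> hom n K K'" "set ls \<subseteq> mcar K"
  shows "f (amodule.comb n K zs ls) = amodule.comb n K' zs (map f ls)"
  using assms(4)
proof (induction ls arbitrary: zs)
  case Nil
  interpret A: amodule n m K by fact
  interpret B: amodule n m K' by fact
  show ?case using hom_zero_pres[OF assms(1-3)] by simp
next
  case (Cons l ls)
  interpret A: amodule n m K by fact
  interpret B: amodule n m K' by fact
  show ?case
  proof (cases zs)
    case Nil
    thus ?thesis using hom_zero_pres[OF assms(1-3)] by simp
  next
    case (Cons z zr)
    have h: "\<forall>x\<in>mcar K. \<forall>y\<in>mcar K. f (madd K x y) = madd K' (f x) (f y)"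
      "\<forall>a\<in>CQ n. \<forall>x\<in>mcar K. f (mact K a x) = mact K' a (f x)" using assms(3) by (auto simp: hom_def)
    show ?thesis using Cons.prems Cons.IH Cons h by (simp add: zelt_CQ)
  qed
qed




context amodule begin

lemma act_swap: assumes "0 \<le> s" "s < int n" "x \<in> C"
  shows "act (qmono s [X, Y]) x = act (qmono s [Y, X]) x"
proof -
  have e: "qmono s [Y, X] = qadd (rel1 s) (qmono s [X, Y])"
    by (auto simp: qmono_def rel1_def qadd_def fun_eq_iff)
  have "act (qmono s [Y, X]) x = add (act (rel1 s) x) (act (qmono s [X, Y]) x)"
    unfolding e using assms by (intro act_qadd rel1_CQ mono_CQ) auto
  also have "act (rel1 s) x = zer" using rel1_Ibar[OF npos assms(1,2)] assms(3) by (rule act_Ibar)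
  finally show ?thesis using assms by (simp add: mono_CQ)
qed

lemma act_factor: assumes "0 \<le> s" "s < int n" "x \<in> C"
  shows "act (qmono s (u @ w)) x = act (qmono (pend n s u) w) (act (qmono s u) x)"
proof -
  have "qmul n (qmono (pend n s u) w) (qmono s u) = qmono s (u @ w)"
    using qmul_mono[OF assms(1,2)] by simp
  moreover have "qmono (pend n s u) w \<in> CQ n" using pend_range[OF npos] by (intro mono_CQ) auto
  ultimately show ?thesis using act_qmul mono_CQ assms by metis
qed

definition eqw :: "arr list \<Rightarrow> arr list \<Rightarrow> bool" where
  "eqw w w' \<longleftrightarrow> (\<forall>s. pend n s w = pend n s w') \<and>
     (\<forall>s x. 0 \<le> s \<and> s < int n \<and> x \<in> C \<longrightarrow> act (qmono s w) x = act (qmono s w') x)"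

lemma eqw_refl: "eqw w w" by (simp add: eqw_def)
lemma eqw_sym: "eqw w w' \<Longrightarrow> eqw w' w" by (simp add: eqw_def)
lemma eqw_trans: "eqw w w' \<Longrightarrow> eqw w' w'' \<Longrightarrow> eqw w w''" by (simp add: eqw_def)

lemma mono_act_closed: "0 \<le> s \<Longrightarrow> s < int n \<Longrightarrow> x \<in> C \<Longrightarrow> act (qmono s w) x \<in> C"
  by (simp add: mono_CQ)

lemma eqw_cong: assumes "eqw w w'" shows "eqw (u @ w @ u') (u @ w' @ u')"
proof -
  have p: "pend n s (u @ w @ u') = pend n s (u @ w' @ u')" for s
    using assms by (simp add: eqw_def pend_append)
  have "act (qmono s (u @ w @ u')) x = act (qmono s (u @ w' @ u')) x"
    if "0 \<le> s" "s < int n" "x \<in> C" for s x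
  proof -
    let ?p = "pend n s u"
    have pr: "0 \<le> ?p" "?p < int n" using pend_range[OF npos] by auto
    have y: "act (qmono s u) x \<in> C" using that by (rule mono_act_closed)
    have "act (qmono s (u @ w @ u')) x = act (qmono (pend n ?p w) u') (act (qmono ?p w) (act (qmono s u) x))"
      using act_factor[OF that, of u "w @ u'"] act_factor[OF pr y, of w u'] by simp
    also have "\<dots> = act (qmono (pend n ?p w') u') (act (qmono ?p w') (act (qmono s u) x))"
      using assms pr y by (simp add: eqw_def)
    also have "\<dots> = act (qmono s (u @ w' @ u')) x"
      using act_factor[OF that, of u "w' @ u'"] act_factor[OF pr y, of w' u'] by simp
    finally show ?thesis .
  qed
  thus ?thesis using p by (simp add: eqw_def)
qed

lemma eqw_swap: "eqw [X, Y] [Y, X]"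
  by (simp add: eqw_def act_swap pend_def algebra_simps)

lemma eqw_XY: "eqw (replicate a X @ [Y]) ([Y] @ replicate a X)"
proof (induction a)
  case 0 thus ?case by (simp add: eqw_refl)
next
  case (Suc a)
  have "eqw (replicate a X @ [X, Y] @ []) (replicate a X @ [Y, X] @ [])" by (rule eqw_cong[OF eqw_swap])
  moreover have "eqw ([] @ (replicate a X @ [Y]) @ [X]) ([] @ ([Y] @ replicate a X) @ [X])"
    by (rule eqw_cong[OF Suc])
  ultimately have "eqw (replicate a X @ [X, Y]) ([Y] @ replicate a X @ [X])"
    by (auto intro: eqw_trans)
  thus ?case by (simp add: replicate_append_same[symmetric])
qed

lemma eqw_XdYd: "eqw (replicate d X @ replicate d Y) (lw d)"
proof (induction d)
  case 0 thus ?case by (simp add: eqw_refl lw_def)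
next
  case (Suc d)
  have "eqw ([] @ (replicate (Suc d) X @ [Y]) @ replicate d Y) ([] @ ([Y] @ replicate (Suc d) X) @ replicate d Y)"
    by (rule eqw_cong[OF eqw_XY])
  moreover have "eqw ([Y, X] @ (replicate d X @ replicate d Y) @ []) ([Y, X] @ lw d @ [])"
    by (rule eqw_cong[OF Suc])
  ultimately have "eqw (replicate (Suc d) X @ [Y] @ replicate d Y) ([Y, X] @ lw d)"
    by (auto intro: eqw_trans)
  thus ?case by (simp add: lw_def)
qed

lemma zeltX_ev: assumes "0 \<le> j" "j < int n"
  shows "qmul n (zelt n (fps_X ^ d)) (ev j) = qmono j (lw d)"
proof (rule ext, clarify)
  fix s w
  have "qmul n (zelt n (fps_X ^ d)) (ev j) (s, w) = (if pend n s w = j then zelt n (fps_X ^ d) (s, w) else 0)"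
    using zelt_ev_comm[OF npos assms] qmul_ev_left by metis
  also have "\<dots> = qmono j (lw d) (s, w)"
  proof (cases "\<exists>k. w = lw k")
    case True
    then obtain k where k: "w = lw k" by blast
    have inj: "lw k = lw d \<longleftrightarrow> k = d" by (metis length_lw mult_left_cancel zero_neq_numeral)
    show ?thesis
      by (cases "0 \<le> s \<and> s < int n") (auto simp: k zelt_lw pend_lw qmono_def inj assms)
  next
    case False
    thus ?thesis using zelt_not[of w n "fps_X ^ d" s] by (auto simp: qmono_def)
  qed
  finally show "qmul n (zelt n (fps_X ^ d)) (ev j) (s, w) = qmono j (lw d) (s, w)" .
qed

lemma fps_X_pow_cancel: "(fps_X ^ d :: complex fps) * z = 0 \<Longrightarrow> z = 0"
  by simp

definition qsumK :: "nat \<Rightarrow> qel" where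
  "qsumK k = (\<lambda>(s, w). if w = [] \<and> 0 \<le> s \<and> s < int k then 1 else 0)"

lemma qsumK_CQ: "k \<le> n \<Longrightarrow> qsumK k \<in> CQ n" by (auto simp: qsumK_def CQ_def)

lemma qsumK_Suc: "qsumK (Suc k) = qadd (qsumK k) (ev (int k))"
  by (auto simp: qsumK_def qadd_def ev_def fun_eq_iff)

lemma qsumK_n: "qsumK n = qone n" by (auto simp: qsumK_def qone_def qscal_def fun_eq_iff)

lemma qsumK_zero: "qsumK 0 = qzero" by (auto simp: qsumK_def qzero_def fun_eq_iff)

lemma unit_inj:
  assumes zf: "Z_free n K" and v: "0 \<le> v" "v < int n" and y: "y \<in> C"
    and kill: "\<forall>b\<in>eA n v. act b y = zer"
  shows "y = zer"
proof -
  obtain bs where bs: "set bs \<subseteq> C" "\<forall>x\<in>C. \<exists>zs. length zs = length bs \<and> x = comb zs bs"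
    "\<forall>zs. length zs = length bs \<and> comb zs bs = zer \<longrightarrow> (\<forall>z\<in>set zs. z = 0)"
    using zf unfolding Z_free_def comb_def by blast
  have ej: "act (ev j) y = zer" if j: "0 \<le> j" "j < int n" for j
  proof -
    define d where "d = nat ((v - j) mod int n)"
    have pd: "pend n j (replicate d X) = v"
      using npos v j by (simp add: pend_def d_def mod_add_right_eq)
    have inA: "qmono j (replicate d X) \<in> eA n v"
      using pd j mono_CQ[OF j, of "replicate d X"] by (auto simp: eA_char eAc_def qmono_def)
    have k0: "act (qmono j (replicate d X)) y = zer" using kill inA by blast
    let ?u = "act (ev j) y"
    have u: "?u \<in> C" using y j by (simp add: ev_CQ)
    have "act (zelt n (fps_X ^ d)) ?u = act (qmul n (zelt n (fps_X ^ d)) (ev j)) y"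
      using act_qmul[OF zelt_CQ ev_CQ[OF j] y] by simp
    also have "\<dots> = act (qmono j (lw d)) y" by (simp add: zeltX_ev[OF j])
    also have "\<dots> = act (qmono j (replicate d X @ replicate d Y)) y"
      using eqw_XdYd[of d] j y by (simp add: eqw_def)
    also have "\<dots> = act (qmono v (replicate d Y)) (act (qmono j (replicate d X)) y)"
      using act_factor[OF j y] pd by simp
    also have "\<dots> = zer" using k0 v by (simp add: mono_CQ)
    finally have t: "act (zelt n (fps_X ^ d)) ?u = zer" .
    obtain zs where zs: "length zs = length bs" "?u = comb zs bs" using bs(2) u by blast
    have "comb (map (\<lambda>z. fps_X ^ d * z) zs) bs = zer"
      using comb_scale[OF bs(1)] t zs by simp
    hence "\<forall>z\<in>set (map (\<lambda>z. fps_X ^ d * z) zs). z = 0" using bs(3)[rule_format, of "map (\<lambda>z. fps_X ^ d * z) zs"] zs(1) by simp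
    hence "\<forall>z\<in>set zs. z = 0" by simp
    thus ?thesis using zs comb_zeros[OF bs(1)] by simp
  qed
  have "k \<le> n \<Longrightarrow> act (qsumK k) y = zer" for k
  proof (induction k)
    case 0 thus ?case using y by (simp add: qsumK_zero)
  next
    case (Suc k)
    have "act (qsumK (Suc k)) y = add (act (qsumK k) y) (act (ev (int k)) y)"
      unfolding qsumK_Suc using Suc y by (intro act_qadd qsumK_CQ ev_CQ) auto
    thus ?case using Suc ej[of "int k"] by simp
  qed
  hence "act (qone n) y = zer" using qsumK_n by (metis order_refl)
  thus ?thesis using act_one[OF y] by simp
qed

end




lemma eA_qadd: "b \<in> eA n v \<Longrightarrow> c \<in> eA n v \<Longrightarrow> qadd b c \<in> eA n v"
  using qadd_CQ[of b n c] by (auto simp: eA_char eAc_def qadd_def)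

locale jctx = amodule n m K for n m :: nat and K :: "('a, 'b) amod_scheme" +
  fixes v :: int assumes v0: "0 \<le> v" and vn: "v < int n"
begin

abbreviation "eAv \<equiv> eA n v"
abbreviation "J \<equiv> Jmod n m v K"
abbreviation "JC \<equiv> mcar (Jmod n m v K)"
abbreviation "uJ \<equiv> unitJ n v K"
abbreviation "S \<equiv> unitJ n v K ` mcar K"
abbreviation "cs \<equiv> coset (Jmod n m v K) (unitJ n v K ` mcar K)"
abbreviation "Om \<equiv> omega n m v K"
abbreviation "Jadd \<equiv> madd (Jmod n m v K)"
abbreviation "Jzero \<equiv> mzero (Jmod n m v K)"
abbreviation "Jact \<equiv> mact (Jmod n m v K)"

definition F :: "(qel \<Rightarrow> 'a) set" where "F = {\<phi>. \<phi> \<in> extensional eAv \<and> \<phi> ` eAv \<subseteq> C}"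

lemma Jadd_eq: "Jadd \<phi> \<psi> = restrict (\<lambda>b. add (\<phi> b) (\<psi> b)) eAv" by (simp add: Jmod_def)
lemma Jzero_eq: "Jzero = restrict (\<lambda>b. zer) eAv" by (simp add: Jmod_def)
lemma Jact_eq: "Jact a \<phi> = restrict (\<lambda>b. \<phi> (qmul n b a)) eAv" by (simp add: Jmod_def)
lemma uJ_eq: "uJ y = restrict (\<lambda>b. act b y) eAv" by (simp add: unitJ_def)

lemma JC_eq: "JC = {\<phi>. \<phi> \<in> extensional eAv \<and> \<phi> ` eAv \<subseteq> eV K v \<and>
        (\<forall>b\<in>eAv. \<forall>c\<in>eAv. \<phi> (qadd b c) = add (\<phi> b) (\<phi> c)) \<and>
        (\<forall>z. \<forall>b\<in>eAv. \<phi> (qmul n (zelt n z) b) = act (zelt n z) (\<phi> b)) \<and>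
        (\<forall>b\<in>eAv \<inter> Ibar n m. \<phi> b = zer)}"
  by (simp add: Jmod_def)

lemma eV_sub: "eV K v \<subseteq> C" using v0 vn by (auto simp: eV_def ev_CQ)

lemma eV_act: "b \<in> eAv \<Longrightarrow> x \<in> C \<Longrightarrow> act b x \<in> eV K v"
proof -
  assume b: "b \<in> eAv" and x: "x \<in> C"
  have "act b x = act (qmul n (ev v) b) x" using qmul_ev_eA[OF b] by simp
  also have "\<dots> = act (ev v) (act b x)" using b x v0 vn by (simp add: act_qmul ev_CQ eA_CQ)
  finally show ?thesis using b x by (auto simp: eV_def eA_CQ)
qed

lemma eV_ev: "x \<in> eV K v \<Longrightarrow> act (ev v) x = x"
proof -
  assume "x \<in> eV K v"
  then obtain x' where x': "x' \<in> C" "x = act (ev v) x'" by (auto simp: eV_def)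
  have "qmul n (ev v) (ev v) = ev v" using ev_eA[OF npos v0 vn] qmul_ev_eA by blast
  thus ?thesis using x' v0 vn by (metis act_qmul ev_CQ)
qed

lemma JC_F: "JC \<subseteq> F" using eV_sub by (auto simp: JC_eq F_def)

lemma F_ext: "\<phi> \<in> F \<Longrightarrow> \<psi> \<in> F \<Longrightarrow> (\<And>b. b \<in> eAv \<Longrightarrow> \<phi> b = \<psi> b) \<Longrightarrow> \<phi> = \<psi>"
  by (auto simp: F_def intro: extensionalityI)

lemma F_val: "\<phi> \<in> F \<Longrightarrow> b \<in> eAv \<Longrightarrow> \<phi> b \<in> C" by (auto simp: F_def)

lemma Jadd_F: "\<phi> \<in> F \<Longrightarrow> \<psi> \<in> F \<Longrightarrow> Jadd \<phi> \<psi> \<in> F"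
  unfolding F_def Jadd_eq by (auto intro!: add_closed)
lemma Jzero_F: "Jzero \<in> F" by (auto simp: F_def Jzero_eq)
lemma uJ_F: "y \<in> C \<Longrightarrow> uJ y \<in> F" by (auto simp: F_def uJ_eq eA_CQ)
lemma Jact_F: "a \<in> CQ n \<Longrightarrow> \<phi> \<in> F \<Longrightarrow> Jact a \<phi> \<in> F"
  by (auto simp: F_def Jact_eq qmul_right_eA)

lemma F_assoc: "\<phi> \<in> F \<Longrightarrow> \<psi> \<in> F \<Longrightarrow> \<chi> \<in> F \<Longrightarrow> Jadd (Jadd \<phi> \<psi>) \<chi> = Jadd \<phi> (Jadd \<psi> \<chi>)"
  by (intro F_ext Jadd_F) (auto simp: Jadd_eq F_val add_assoc)
lemma F_comm: "\<phi> \<in> F \<Longrightarrow> \<psi> \<in> F \<Longrightarrow> Jadd \<phi> \<psi> = Jadd \<psi> \<phi>"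
  by (intro F_ext Jadd_F) (auto simp: Jadd_eq F_val add_comm)
lemma F_lzero: "\<phi> \<in> F \<Longrightarrow> Jadd Jzero \<phi> = \<phi>"
  by (intro F_ext Jadd_F Jzero_F) (auto simp: Jadd_eq Jzero_eq F_val)
lemma F_rzero: "\<phi> \<in> F \<Longrightarrow> Jadd \<phi> Jzero = \<phi>"
  by (intro F_ext Jadd_F Jzero_F) (auto simp: Jadd_eq Jzero_eq F_val)

lemma uJ_add: "x \<in> C \<Longrightarrow> y \<in> C \<Longrightarrow> uJ (add x y) = Jadd (uJ x) (uJ y)"
  by (intro F_ext Jadd_F uJ_F add_closed) (auto simp: Jadd_eq uJ_eq act_add eA_CQ)

lemma uJ_zero: "uJ zer = Jzero"
  by (intro F_ext uJ_F Jzero_F zero_closed) (auto simp: uJ_eq Jzero_eq eA_CQ)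

lemma Jact_add: "a \<in> CQ n \<Longrightarrow> \<phi> \<in> F \<Longrightarrow> \<psi> \<in> F \<Longrightarrow> Jact a (Jadd \<phi> \<psi>) = Jadd (Jact a \<phi>) (Jact a \<psi>)"
  by (intro F_ext Jadd_F Jact_F) (auto simp: Jadd_eq Jact_eq qmul_right_eA)

lemma Jact_uJ: "a \<in> CQ n \<Longrightarrow> y \<in> C \<Longrightarrow> Jact a (uJ y) = uJ (act a y)"
  by (intro F_ext Jact_F uJ_F act_closed) (auto simp: Jact_eq uJ_eq qmul_right_eA act_qmul eA_CQ)

lemma S_add: "s \<in> S \<Longrightarrow> t \<in> S \<Longrightarrow> Jadd s t \<in> S"
proof -
  assume "s \<in> S" "t \<in> S"
  then obtain x y where "x \<in> C" "y \<in> C" "s = uJ x" "t = uJ y" by blast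
  thus ?thesis using uJ_add[of x y] by (metis add_closed image_eqI)
qed

lemma S_neg: "s \<in> S \<Longrightarrow> \<exists>t\<in>S. Jadd s t = Jzero"
proof -
  assume "s \<in> S"
  then obtain y where y: "y \<in> C" "s = uJ y" by blast
  obtain y' where y': "y' \<in> C" "add y y' = zer" using neg_ex y(1) by blast
  have "Jadd s (uJ y') = Jzero" using y y' uJ_add uJ_zero by metis
  thus ?thesis using y' by blast
qed

lemma cs_mem: "\<phi> \<in> F \<Longrightarrow> \<phi> \<in> cs \<phi>"
proof -
  assume f: "\<phi> \<in> F"
  have "\<phi> = Jadd \<phi> (uJ zer)" using F_rzero[OF f] uJ_zero by simp
  moreover have "uJ zer \<in> S" by simp
  ultimately show ?thesis unfolding coset_def by blast
qed

lemma cs_shift: assumes "\<phi> \<in> F" "s \<in> S" shows "cs (Jadd \<phi> s) = cs \<phi>"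
proof
  have sF: "s \<in> F" using assms(2) uJ_F by auto
  show "cs (Jadd \<phi> s) \<subseteq> cs \<phi>"
  proof
    fix x assume "x \<in> cs (Jadd \<phi> s)"
    then obtain t where t: "t \<in> S" "x = Jadd (Jadd \<phi> s) t" by (auto simp: coset_def)
    have "t \<in> F" using t uJ_F by auto
    hence "x = Jadd \<phi> (Jadd s t)" using t assms sF F_assoc by simp
    thus "x \<in> cs \<phi>" using S_add[OF assms(2) t(1)] by (auto simp: coset_def)
  qed
  show "cs \<phi> \<subseteq> cs (Jadd \<phi> s)"
  proof
    fix x assume "x \<in> cs \<phi>"
    then obtain t where t: "t \<in> S" "x = Jadd \<phi> t" by (auto simp: coset_def)
    obtain s' where s': "s' \<in> S" "Jadd s s' = Jzero" using S_neg assms(2) by blast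
    have F': "t \<in> F" "s' \<in> F" using t s' uJ_F by auto
    have "Jadd (Jadd \<phi> s) (Jadd s' t) = Jadd \<phi> (Jadd (Jadd s s') t)"
      using assms sF F' by (simp add: F_assoc Jadd_F)
    also have "\<dots> = x" using s' t F' by (simp add: F_lzero)
    finally show "x \<in> cs (Jadd \<phi> s)" using S_add[OF s'(1) t(1)] by (auto simp: coset_def)
  qed
qed

lemma cs_memD: "\<psi> \<in> cs \<phi> \<Longrightarrow> \<exists>y\<in>C. \<psi> = Jadd \<phi> (uJ y)"
  by (auto simp: coset_def)

lemma cs_eq_mem: "\<phi> \<in> F \<Longrightarrow> \<psi> \<in> cs \<phi> \<Longrightarrow> cs \<psi> = cs \<phi>"
  using cs_memD cs_shift by blast

lemma some_cs: "\<phi> \<in> F \<Longrightarrow> \<exists>y\<in>C. (SOME x. x \<in> cs \<phi>) = Jadd \<phi> (uJ y)"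
  using cs_mem someI cs_memD by metis

lemma Om_add: assumes "\<phi> \<in> F" "\<psi> \<in> F" shows "madd Om (cs \<phi>) (cs \<psi>) = cs (Jadd \<phi> \<psi>)"
proof -
  obtain y where y: "y \<in> C" "(SOME x. x \<in> cs \<phi>) = Jadd \<phi> (uJ y)" using some_cs assms(1) by blast
  obtain y' where y': "y' \<in> C" "(SOME x. x \<in> cs \<psi>) = Jadd \<psi> (uJ y')" using some_cs assms(2) by blast
  have u: "uJ y \<in> F" "uJ y' \<in> F" using y y' uJ_F by auto
  have "madd Om (cs \<phi>) (cs \<psi>) = cs (Jadd (Jadd \<phi> (uJ y)) (Jadd \<psi> (uJ y')))"
    using y y' by (simp add: omega_def quotmod_def)
  also have "Jadd (Jadd \<phi> (uJ y)) (Jadd \<psi> (uJ y')) = Jadd (Jadd \<phi> \<psi>) (Jadd (uJ y) (uJ y'))"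
    using assms u by (metis F_assoc F_comm Jadd_F)
  also have "\<dots> = Jadd (Jadd \<phi> \<psi>) (uJ (add y y'))" using uJ_add y y' by simp
  also have "cs \<dots> = cs (Jadd \<phi> \<psi>)" using y y' assms by (intro cs_shift Jadd_F) auto
  finally show ?thesis .
qed

lemma Om_act: assumes "a \<in> CQ n" "\<phi> \<in> F" shows "mact Om a (cs \<phi>) = cs (Jact a \<phi>)"
proof -
  obtain y where y: "y \<in> C" "(SOME x. x \<in> cs \<phi>) = Jadd \<phi> (uJ y)" using some_cs assms(2) by blast
  have "mact Om a (cs \<phi>) = cs (Jact a (Jadd \<phi> (uJ y)))" using y by (simp add: omega_def quotmod_def)
  also have "Jact a (Jadd \<phi> (uJ y)) = Jadd (Jact a \<phi>) (uJ (act a y))"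
    using assms y by (simp add: Jact_add uJ_F Jact_uJ)
  also have "cs \<dots> = cs (Jact a \<phi>)" using assms y by (intro cs_shift Jact_F) auto
  finally show ?thesis .
qed

lemma Om_zero: "mzero Om = cs Jzero" by (simp add: omega_def quotmod_def)

lemma Om_car: "mcar Om = cs ` JC" by (simp add: omega_def quotmod_def)

lemma cs_zero_D: assumes "\<phi> \<in> F" "cs \<phi> = cs Jzero" shows "\<exists>y\<in>C. \<phi> = uJ y"
proof -
  have "\<phi> \<in> cs Jzero" using cs_mem[OF assms(1)] assms(2) by simp
  then obtain y where "y \<in> C" "\<phi> = Jadd Jzero (uJ y)" using cs_memD by blast
  thus ?thesis using F_lzero uJ_F by auto
qed

lemma uJ_JC: assumes "y \<in> C" shows "uJ y \<in> JC"
  unfolding JC_eq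
proof (intro CollectI conjI ballI allI)
  show "uJ y \<in> extensional eAv" by (simp add: uJ_eq)
  show "uJ y ` eAv \<subseteq> eV K v" using assms eV_act by (auto simp: uJ_eq)
  fix b assume b: "b \<in> eAv"
  { fix c assume c: "c \<in> eAv"
    show "uJ y (qadd b c) = add (uJ y b) (uJ y c)" using b c assms
      by (simp add: uJ_eq eA_qadd act_qadd eA_CQ) }
  { fix z show "uJ y (qmul n (zelt n z) b) = act (zelt n z) (uJ y b)" using b assms
      by (simp add: uJ_eq zelt_eA act_qmul zelt_CQ eA_CQ) }
next
  fix b assume "b \<in> eAv \<inter> Ibar n m"
  thus "uJ y b = zer" using assms by (simp add: uJ_eq act_Ibar)
qed

lemma eV_add: "x \<in> eV K v \<Longrightarrow> y \<in> eV K v \<Longrightarrow> add x y \<in> eV K v"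
proof -
  assume "x \<in> eV K v" "y \<in> eV K v"
  then obtain x' y' where "x' \<in> C" "y' \<in> C" "x = act (ev v) x'" "y = act (ev v) y'" by (auto simp: eV_def)
  thus ?thesis using v0 vn by (auto simp: eV_def act_add[symmetric] ev_CQ)
qed

lemma Jadd_JC: assumes "\<phi> \<in> JC" "\<psi> \<in> JC" shows "Jadd \<phi> \<psi> \<in> JC"
proof -
  have P: "\<phi> \<in> extensional eAv" "\<phi> ` eAv \<subseteq> eV K v"
        "\<forall>b\<in>eAv. \<forall>c\<in>eAv. \<phi> (qadd b c) = add (\<phi> b) (\<phi> c)"
        "\<forall>z. \<forall>b\<in>eAv. \<phi> (qmul n (zelt n z) b) = act (zelt n z) (\<phi> b)"
        "\<forall>b\<in>eAv \<inter> Ibar n m. \<phi> b = zer" using assms(1) unfolding JC_eq by blast+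
  have Q: "\<psi> \<in> extensional eAv" "\<psi> ` eAv \<subseteq> eV K v"
        "\<forall>b\<in>eAv. \<forall>c\<in>eAv. \<psi> (qadd b c) = add (\<psi> b) (\<psi> c)"
        "\<forall>z. \<forall>b\<in>eAv. \<psi> (qmul n (zelt n z) b) = act (zelt n z) (\<psi> b)"
        "\<forall>b\<in>eAv \<inter> Ibar n m. \<psi> b = zer" using assms(2) unfolding JC_eq by blast+
  have PC: "\<phi> b \<in> C" "\<psi> b \<in> C" if "b \<in> eAv" for b using P(2) Q(2) eV_sub that by auto
  show ?thesis unfolding JC_eq
  proof (intro CollectI conjI ballI allI)
    show "Jadd \<phi> \<psi> \<in> extensional eAv" by (simp add: Jadd_eq)
    show "Jadd \<phi> \<psi> ` eAv \<subseteq> eV K v" using P(2) Q(2) eV_add by (auto simp: Jadd_eq)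
    fix b assume b: "b \<in> eAv"
    { fix c assume c: "c \<in> eAv"
      have "add (add (\<phi> b) (\<phi> c)) (add (\<psi> b) (\<psi> c)) = add (add (\<phi> b) (\<psi> b)) (add (\<phi> c) (\<psi> c))"
        using PC b c by (metis add_assoc add_closed add_left_comm)
      thus "Jadd \<phi> \<psi> (qadd b c) = add (Jadd \<phi> \<psi> b) (Jadd \<phi> \<psi> c)"
        using b c P(3) Q(3) by (simp add: Jadd_eq eA_qadd) }
    { fix z show "Jadd \<phi> \<psi> (qmul n (zelt n z) b) = act (zelt n z) (Jadd \<phi> \<psi> b)"
        using b P(4) Q(4) PC by (simp add: Jadd_eq zelt_eA act_add zelt_CQ) }
  next
    fix b assume "b \<in> eAv \<inter> Ibar n m"
    thus "Jadd \<phi> \<psi> b = zer" using P(5) Q(5) by (simp add: Jadd_eq)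
  qed
qed

lemma uJ_inj: assumes zf: "Z_free n K" and x: "x \<in> C" and y: "y \<in> C" and e: "uJ x = uJ y"
  shows "x = y"
proof -
  obtain y' where y': "y' \<in> C" "add y y' = zer" using neg_ex y by blast
  have "\<forall>b\<in>eAv. act b (add x y') = zer"
  proof
    fix b assume b: "b \<in> eAv"
    have "act b x = act b y" using fun_cong[OF e, of b] b by (simp add: uJ_eq)
    have bq: "b \<in> CQ n" using b by (rule eA_CQ)
    have "act b (add x y') = add (act b x) (act b y')" using act_add[OF bq x y'(1)] .
    also have "\<dots> = add (act b y) (act b y')" using \<open>act b x = act b y\<close> by simp
    also have "\<dots> = act b (add y y')" using act_add[OF bq y y'(1)] by simp
    finally show "act b (add x y') = zer" using y'(2) bq by simp
  qed
  hence z: "add x y' = zer" using unit_inj[OF zf v0 vn] x y' by simp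
  have "x = add x (add y' y)" using y y' x by (simp add: add_comm)
  also have "\<dots> = add (add x y') y" using x y y' by (simp add: add_assoc)
  finally show ?thesis using z y by simp
qed

end




context jctx begin
lemma eV_zero: "zer \<in> eV K v"
  using v0 vn by (auto simp: eV_def ev_CQ intro!: image_eqI[of _ _ zer])

lemma eV_zelt: assumes "x \<in> eV K v" shows "act (zelt n z) x \<in> eV K v"
proof -
  obtain x' where x': "x' \<in> C" "x = act (ev v) x'" using assms by (auto simp: eV_def)
  have "act (zelt n z) x = act (qmul n (zelt n z) (ev v)) x'" using x' v0 vn by (simp add: act_qmul zelt_CQ ev_CQ)
  also have "\<dots> = act (ev v) (act (zelt n z) x')" using x' v0 vn
    by (simp add: zelt_ev_comm[OF npos v0 vn] act_qmul zelt_CQ ev_CQ)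
  finally show ?thesis using x' by (auto simp: eV_def zelt_CQ)
qed

lemma ev_zelt_comm: "x \<in> C \<Longrightarrow> act (ev v) (act (zelt n z) x) = act (zelt n z) (act (ev v) x)"
  using v0 vn by (metis act_qmul zelt_CQ ev_CQ zelt_ev_comm[OF npos v0 vn])
end

locale twoctx = M: jctx n m M v + N: jctx n m N v
  for n m :: nat and M :: "'m amod" and v :: int and N :: "'k amod"
begin

definition htil :: "('m \<Rightarrow> 'k) \<Rightarrow> 'm \<Rightarrow> (qel \<Rightarrow> 'k)" where
  "htil h x = restrict (\<lambda>b. h (mact M b x)) (eA n v)"

definition psi :: "('m \<Rightarrow> 'k) \<Rightarrow> 'm \<Rightarrow> (qel \<Rightarrow> 'k) set" where
  "psi h = restrict (\<lambda>x. N.cs (htil h x)) (mcar M)"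

lemma homZ_D:
  assumes "h \<in> homZ n v M N"
  shows "h \<in> extensional (eV M v)" "\<And>x. x \<in> eV M v \<Longrightarrow> h x \<in> eV N v"
    "\<And>x y. x \<in> eV M v \<Longrightarrow> y \<in> eV M v \<Longrightarrow> h (M.add x y) = N.add (h x) (h y)"
    "\<And>x z. x \<in> eV M v \<Longrightarrow> h (M.act (zelt n z) x) = N.act (zelt n z) (h x)"
  using assms unfolding homZ_def by auto

lemma homZ_zero: assumes "h \<in> homZ n v M N" shows "h M.zer = N.zer"
proof -
  have c: "h M.zer \<in> N.C" using homZ_D(2)[OF assms M.eV_zero] N.eV_sub by auto
  have "h M.zer = N.add (h M.zer) (h M.zer)"
    using homZ_D(3)[OF assms M.eV_zero M.eV_zero] by simp
  thus ?thesis using N.zero_unique[OF c c] by simp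
qed

lemma htil_JC: assumes h: "h \<in> homZ n v M N" and x: "x \<in> M.C" shows "htil h x \<in> N.JC"
  unfolding N.JC_eq
proof (intro CollectI conjI ballI allI)
  show "htil h x \<in> extensional N.eAv" by (simp add: htil_def)
  show "htil h x ` N.eAv \<subseteq> eV N v" using homZ_D(2)[OF h] M.eV_act x by (auto simp: htil_def)
  fix b assume b: "b \<in> N.eAv"
  have bx: "M.act b x \<in> eV M v" using M.eV_act b x by simp
  { fix c assume c: "c \<in> N.eAv"
    have cx: "M.act c x \<in> eV M v" using M.eV_act c x by simp
    show "htil h x (qadd b c) = N.add (htil h x b) (htil h x c)" using b c x bx cx homZ_D(3)[OF h bx cx]
      by (simp add: htil_def eA_qadd M.act_qadd eA_CQ) }
  { fix z show "htil h x (qmul n (zelt n z) b) = N.act (zelt n z) (htil h x b)"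
      using b x bx homZ_D(4)[OF h bx] by (simp add: htil_def zelt_eA M.act_qmul zelt_CQ eA_CQ) }
next
  fix b assume "b \<in> N.eAv \<inter> Ibar n m"
  thus "htil h x b = N.zer" using x homZ_zero[OF h] by (simp add: htil_def M.act_Ibar)
qed

lemma htil_F: "h \<in> homZ n v M N \<Longrightarrow> x \<in> M.C \<Longrightarrow> htil h x \<in> N.F"
  using htil_JC N.JC_F by blast

lemma htil_add: assumes h: "h \<in> homZ n v M N" and x: "x \<in> M.C" and y: "y \<in> M.C"
  shows "htil h (M.add x y) = N.Jadd (htil h x) (htil h y)"
proof (rule N.F_ext)
  show "htil h (M.add x y) \<in> N.F" using htil_F h x y by simp
  show "N.Jadd (htil h x) (htil h y) \<in> N.F" using htil_F h x y N.Jadd_F by simp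
  fix b assume b: "b \<in> N.eAv"
  show "htil h (M.add x y) b = N.Jadd (htil h x) (htil h y) b"
    using b x y homZ_D(3)[OF h M.eV_act[OF b x] M.eV_act[OF b y]]
    by (simp add: htil_def N.Jadd_eq M.act_add eA_CQ)
qed

lemma htil_act: assumes h: "h \<in> homZ n v M N" and x: "x \<in> M.C" and a: "a \<in> CQ n"
  shows "htil h (M.act a x) = N.Jact a (htil h x)"
proof (rule N.F_ext)
  show "htil h (M.act a x) \<in> N.F" using htil_F h x a by simp
  show "N.Jact a (htil h x) \<in> N.F" using htil_F h x N.Jact_F a by simp
  fix b assume b: "b \<in> N.eAv"
  show "htil h (M.act a x) b = N.Jact a (htil h x) b"
    using b x a by (simp add: htil_def N.Jact_eq qmul_right_eA M.act_qmul eA_CQ)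
qed

lemma psi_hom: assumes h: "h \<in> homZ n v M N" shows "psi h \<in> hom n M N.Om"
  unfolding hom_def
proof (intro CollectI conjI ballI subsetI)
  show "psi h \<in> extensional M.C" by (simp add: psi_def)
next
  fix y assume "y \<in> psi h ` M.C"
  then obtain x where x: "x \<in> M.C" "y = psi h x" by blast
  thus "y \<in> mcar N.Om" using htil_JC[OF h x(1)] by (simp add: psi_def N.Om_car)
next
  fix x y assume x: "x \<in> M.C" and y: "y \<in> M.C"
  show "psi h (M.add x y) = madd N.Om (psi h x) (psi h y)"
    using x y by (simp add: psi_def N.Om_add htil_F[OF h] htil_add[OF h])
next
  fix a x assume a: "a \<in> CQ n" and x: "x \<in> M.C"
  show "psi h (M.act a x) = mact N.Om a (psi h x)"
    using x a by (simp add: psi_def N.Om_act htil_F[OF h] htil_act[OF h])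
qed

end




context twoctx begin

lemma psi_lc: assumes h: "h \<in> homZ n v M N" and h': "h' \<in> homZ n v M N"
  shows "psi (homZ_lc n v M N c h h') = hom_lc n M N.Om c (psi h) (psi h')"
proof -
  have "N.cs (htil (homZ_lc n v M N c h h') x) = madd N.Om (mact N.Om (qscal n c) (psi h x)) (psi h' x)"
    if x: "x \<in> M.C" for x
  proof -
    let ?h = "homZ_lc n v M N c h h'"
    have e: "htil ?h x = N.Jadd (N.Jact (qscal n c) (htil h x)) (htil h' x)"
    proof (rule N.F_ext)
      show "htil ?h x \<in> N.F" unfolding N.F_def
      proof (intro CollectI conjI subsetI)
        show "htil ?h x \<in> extensional N.eAv" by (simp add: htil_def)
        fix y assume "y \<in> htil ?h x ` N.eAv"
        then obtain b where b: "b \<in> N.eAv" "y = htil ?h x b" by blast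
        have bx: "M.act b x \<in> eV M v" using M.eV_act b x by simp
        have "h (M.act b x) \<in> N.C" "h' (M.act b x) \<in> N.C"
          using homZ_D(2)[OF h bx] homZ_D(2)[OF h' bx] N.eV_sub by auto
        thus "y \<in> N.C" using b bx by (simp add: htil_def homZ_lc_def qscal_CQ)
      qed
      show "N.Jadd (N.Jact (qscal n c) (htil h x)) (htil h' x) \<in> N.F"
        using htil_F[OF h x] htil_F[OF h' x] by (intro N.Jadd_F N.Jact_F qscal_CQ)
      fix b assume b: "b \<in> N.eAv"
      have bx: "M.act b x \<in> eV M v" using M.eV_act b x by simp
      have bq: "b \<in> CQ n" using b by (rule eA_CQ)
      have qc: "qmul n b (qscal n c) = qmul n (qscal n c) b"
        using qmul_qscal_right[OF bq] qmul_qscal_left[OF M.npos] by simp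
      have "h (M.act (qmul n b (qscal n c)) x) = h (M.act (zelt n (fps_const c)) (M.act b x))"
        using qc x bq by (simp add: M.act_qmul qscal_CQ zelt_const)
      also have "\<dots> = N.act (qscal n c) (h (M.act b x))"
        using homZ_D(4)[OF h bx, of "fps_const c"] by (simp add: zelt_const)
      finally have "h (M.act (qmul n b (qscal n c)) x) = N.act (qscal n c) (h (M.act b x))" .
      thus "htil ?h x b = N.Jadd (N.Jact (qscal n c) (htil h x)) (htil h' x) b"
        using b bx by (simp add: htil_def homZ_lc_def N.Jadd_eq N.Jact_eq qmul_right_eA qscal_CQ)
    qed
    show ?thesis using x e htil_F[OF h x] htil_F[OF h' x]
      by (simp add: psi_def N.Om_act N.Om_add qscal_CQ N.Jact_F)
  qed
  thus ?thesis by (simp add: psi_def hom_lc_def restrict_def fun_eq_iff)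
qed

lemma hom_D:
  assumes "f \<in> hom n M N"
  shows "f \<in> extensional M.C" "\<And>x. x \<in> M.C \<Longrightarrow> f x \<in> N.C"
    "\<And>x y. x \<in> M.C \<Longrightarrow> y \<in> M.C \<Longrightarrow> f (M.add x y) = N.add (f x) (f y)"
    "\<And>x a. a \<in> CQ n \<Longrightarrow> x \<in> M.C \<Longrightarrow> f (M.act a x) = N.act a (f x)"
  using assms unfolding hom_def by auto

lemma resv_homZ: assumes f: "f \<in> hom n M N" shows "resv v M f \<in> homZ n v M N"
  unfolding homZ_def
proof (intro CollectI conjI ballI allI subsetI)
  show "resv v M f \<in> extensional (eV M v)" by (simp add: resv_def)
next
  fix y assume "y \<in> resv v M f ` eV M v"
  then obtain x where x: "x \<in> eV M v" "y = resv v M f x" by blast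
  then obtain x' where x': "x' \<in> M.C" "x = M.act (ev v) x'" by (auto simp: eV_def)
  have "y = N.act (ev v) (f x')" using x x' hom_D(4)[OF f] M.v0 M.vn by (simp add: resv_def ev_CQ)
  thus "y \<in> eV N v" using hom_D(2)[OF f x'(1)] by (simp add: eV_def)
next
  fix x y assume x: "x \<in> eV M v" and y: "y \<in> eV M v"
  thus "resv v M f (M.add x y) = N.add (resv v M f x) (resv v M f y)"
  proof -
    have "x \<in> M.C" "y \<in> M.C" using x y M.eV_sub by auto
    thus ?thesis using M.eV_add[OF x y] hom_D(3)[OF f] x y by (simp add: resv_def)
  qed
next
  fix z x assume x: "x \<in> eV M v"
  thus "resv v M f (M.act (zelt n z) x) = N.act (zelt n z) (resv v M f x)"
    using M.eV_zelt hom_D(4)[OF f] M.eV_sub zelt_CQ by (auto simp: resv_def)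
qed

lemma psi_resv: assumes f: "f \<in> hom n M N" shows "psi (resv v M f) = hom_zero M N.Om"
proof -
  have "N.cs (htil (resv v M f) x) = N.cs N.Jzero" if x: "x \<in> M.C" for x
  proof -
    have e: "htil (resv v M f) x = N.uJ (f x)"
    proof (rule N.F_ext)
      show "htil (resv v M f) x \<in> N.F" using htil_F resv_homZ[OF f] x by blast
      show "N.uJ (f x) \<in> N.F" using hom_D(2)[OF f x] N.uJ_F by blast
      fix b assume b: "b \<in> N.eAv"
      show "htil (resv v M f) x b = N.uJ (f x) b"
        using b x M.eV_act[OF b x] hom_D(4)[OF f] by (simp add: htil_def resv_def N.uJ_eq eA_CQ)
    qed
    have "N.cs (N.Jadd N.Jzero (N.uJ (f x))) = N.cs N.Jzero"
      using hom_D(2)[OF f x] by (intro N.cs_shift N.Jzero_F) auto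
    thus ?thesis using e N.F_lzero N.uJ_F hom_D(2)[OF f x] by simp
  qed
  thus ?thesis by (simp add: psi_def hom_zero_def N.Om_zero restrict_def fun_eq_iff)
qed

lemma kernel:
  assumes zf: "Z_free n N"
  shows "{h \<in> homZ n v M N. psi h = hom_zero M N.Om} = resv v M ` hom n M N"
proof
  show "resv v M ` hom n M N \<subseteq> {h \<in> homZ n v M N. psi h = hom_zero M N.Om}"
    using resv_homZ psi_resv by blast
  show "{h \<in> homZ n v M N. psi h = hom_zero M N.Om} \<subseteq> resv v M ` hom n M N"
  proof
    fix h assume "h \<in> {h \<in> homZ n v M N. psi h = hom_zero M N.Om}"
    hence h: "h \<in> homZ n v M N" and z: "psi h = hom_zero M N.Om" by auto
    have ex: "\<exists>y\<in>N.C. htil h x = N.uJ y" if x: "x \<in> M.C" for x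
    proof -
      have "psi h x = hom_zero M N.Om x" using z by simp
      hence "N.cs (htil h x) = N.cs N.Jzero" using x by (simp add: psi_def hom_zero_def N.Om_zero)
      thus ?thesis using N.cs_zero_D htil_F[OF h x] by blast
    qed
    define f where "f = restrict (\<lambda>x. THE y. y \<in> N.C \<and> htil h x = N.uJ y) M.C"
    have fx: "f x \<in> N.C \<and> htil h x = N.uJ (f x)" if x: "x \<in> M.C" for x
    proof -
      obtain y where y: "y \<in> N.C" "htil h x = N.uJ y" using ex x by blast
      have "(THE y. y \<in> N.C \<and> htil h x = N.uJ y) = y"
        using y N.uJ_inj[OF zf] by (intro the_equality) auto
      thus ?thesis using x y by (simp add: f_def)
    qed
    have fu: "f x = y" if "x \<in> M.C" "y \<in> N.C" "htil h x = N.uJ y" for x y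
      using fx[OF that(1)] that N.uJ_inj[OF zf] by metis
    have fhom: "f \<in> hom n M N"
      unfolding hom_def
    proof (intro CollectI conjI ballI subsetI)
      show "f \<in> extensional M.C" by (simp add: f_def)
    next
      fix y assume "y \<in> f ` M.C" thus "y \<in> N.C" using fx by auto
    next
      fix x y assume x: "x \<in> M.C" and y: "y \<in> M.C"
      have "htil h (M.add x y) = N.uJ (N.add (f x) (f y))"
        using htil_add[OF h x y] fx[OF x] fx[OF y] N.uJ_add by simp
      thus "f (M.add x y) = N.add (f x) (f y)" using fu x y fx by simp
    next
      fix a x assume a: "a \<in> CQ n" and x: "x \<in> M.C"
      have "htil h (M.act a x) = N.uJ (N.act a (f x))"
        using htil_act[OF h x a] fx[OF x] N.Jact_uJ a by simp
      thus "f (M.act a x) = N.act a (f x)" using fu x a fx by simp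
    qed
    have "resv v M f = h"
    proof (rule extensionalityI)
      show "resv v M f \<in> extensional (eV M v)" by (simp add: resv_def)
      show "h \<in> extensional (eV M v)" using homZ_D(1)[OF h] .
      fix x assume xe: "x \<in> eV M v"
      have x: "x \<in> M.C" using xe M.eV_sub by auto
      have evA: "ev v \<in> N.eAv" using ev_eA[OF M.npos M.v0 M.vn] .
      have evq: "ev v \<in> CQ n" using ev_CQ M.v0 M.vn by blast
      have "N.uJ (N.act (ev v) (f x)) = N.uJ (f x)"
      proof (rule N.F_ext)
        show "N.uJ (N.act (ev v) (f x)) \<in> N.F" using fx[OF x] evq by (auto intro!: N.uJ_F N.act_closed)
        show "N.uJ (f x) \<in> N.F" using fx[OF x] N.uJ_F by blast
        fix b assume b: "b \<in> N.eAv"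
        have bq: "b \<in> CQ n" using b by (rule eA_CQ)
        have be: "qmul n b (ev v) \<in> N.eAv" using qmul_right_eA[OF b evq] .
        have "N.uJ (N.act (ev v) (f x)) b = N.act (qmul n b (ev v)) (f x)"
          using b bq evq fx[OF x] by (simp add: N.uJ_eq N.act_qmul)
        also have "\<dots> = N.uJ (f x) (qmul n b (ev v))" using be by (simp add: N.uJ_eq)
        also have "\<dots> = htil h x (qmul n b (ev v))" using fx[OF x] by simp
        also have "\<dots> = h (M.act b (M.act (ev v) x))" using be x bq evq by (simp add: htil_def M.act_qmul)
        also have "\<dots> = h (M.act b x)" using M.eV_ev[OF xe] by simp
        also have "\<dots> = htil h x b" using b by (simp add: htil_def)
        finally show "N.uJ (N.act (ev v) (f x)) b = N.uJ (f x) b" using fx[OF x] by simp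
      qed
      hence e1: "N.act (ev v) (f x) = f x" using N.uJ_inj[OF zf] fx[OF x] evq by simp
      have "h x = h (M.act (ev v) x)" using M.eV_ev[OF xe] by simp
      also have "\<dots> = htil h x (ev v)" using evA by (simp add: htil_def)
      also have "\<dots> = N.act (ev v) (f x)" using fx[OF x] evA by (simp add: N.uJ_eq)
      finally show "resv v M f x = h x" using e1 xe by (simp add: resv_def)
    qed
    thus "h \<in> resv v M ` hom n M N" using fhom by blast
  qed
qed

end




context twoctx begin

definition E0 :: "('k \<times> 'm) amod" where
  "E0 = \<lparr>mcar = N.C \<times> M.C, madd = (\<lambda>p q. (N.add (fst p) (fst q), M.add (snd p) (snd q))),
        mzero = (N.zer, M.zer), mact = (\<lambda>a p. (N.act a (fst p), M.act a (snd p)))\<rparr>"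

lemma E0_mod: "is_mod n m E0"
  unfolding is_mod_def
proof (intro conjI ballI)
  show "mzero E0 \<in> mcar E0" by (simp add: E0_def)
  fix x assume x: "x \<in> mcar E0"
  {fix y assume y: "y \<in> mcar E0"
    show "madd E0 x y \<in> mcar E0" using x y by (auto simp: E0_def)
    { fix z assume z: "z \<in> mcar E0"
      show "madd E0 (madd E0 x y) z = madd E0 x (madd E0 y z)"
        using x y z by (auto simp: E0_def N.add_assoc M.add_assoc) }
    show "madd E0 x y = madd E0 y x" using x y by (auto simp: E0_def N.add_comm M.add_comm)
    { fix a assume a: "a \<in> CQ n"
      show "mact E0 a (madd E0 x y) = madd E0 (mact E0 a x) (mact E0 a y)"
        using x y a by (auto simp: E0_def N.act_add M.act_add) } }
  show "madd E0 (mzero E0) x = x" using x by (auto simp: E0_def)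
  show "\<exists>y\<in>mcar E0. madd E0 x y = mzero E0"
  proof -
    obtain a b where ab: "x = (a, b)" "a \<in> N.C" "b \<in> M.C" using x by (auto simp: E0_def)
    obtain a' where "a' \<in> N.C" "N.add a a' = N.zer" using N.neg_ex ab by blast
    moreover obtain b' where "b' \<in> M.C" "M.add b b' = M.zer" using M.neg_ex ab by blast
    ultimately show ?thesis using ab by (auto simp: E0_def intro!: bexI[of _ "(a', b')"])
  qed
  show "mact E0 (qone n) x = x" using x by (auto simp: E0_def N.act_one M.act_one)
  { fix a assume a: "a \<in> CQ n"
    show "mact E0 a x \<in> mcar E0" using x a by (auto simp: E0_def)
    { fix b assume b: "b \<in> CQ n"
      show "mact E0 (qadd a b) x = madd E0 (mact E0 a x) (mact E0 b x)"
        using x a b by (auto simp: E0_def N.act_qadd M.act_qadd)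
      show "mact E0 (qmul n a b) x = mact E0 a (mact E0 b x)"
        using x a b by (auto simp: E0_def N.act_qmul M.act_qmul) } }
  { fix a assume a: "a \<in> Ibar n m"
    show "mact E0 a x = mzero E0" using x a by (auto simp: E0_def N.act_Ibar M.act_Ibar) }
qed

lemma E0_ext: "is_ext n m M N E0"
  unfolding is_ext_def
proof (intro conjI)
  show "mcar E0 = N.C \<times> M.C" by (simp add: E0_def)
  show "is_mod n m E0" by (rule E0_mod)
  show "ext_inc M N \<in> hom n N E0"
    by (auto simp: hom_def ext_inc_def E0_def)
  show "ext_proj M N \<in> hom n E0 M"
    by (auto simp: hom_def ext_proj_def E0_def)
qed

lemma image_sub: assumes h: "h \<in> homZ n v M N"
  shows "\<exists>E. is_ext n m M N E \<and> represents_delta n m v M N E (psi h) \<and> ext_splits n M N E"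
proof (intro exI conjI)
  show "is_ext n m M N E0" by (rule E0_ext)
  show "ext_splits n M N E0"
    unfolding ext_splits_def
    by (rule bexI[of _ "restrict (\<lambda>y. (N.zer, y)) M.C"])
       (auto simp: hom_def E0_def ext_proj_def)
  define g where "g = restrict (\<lambda>p. N.Jadd (N.uJ (fst p)) (htil h (snd p))) (N.C \<times> M.C)"
  have gF: "N.Jadd (N.uJ x) (htil h y) \<in> N.F" if "x \<in> N.C" "y \<in> M.C" for x y
    using that htil_F[OF h] N.uJ_F N.Jadd_F by blast
  have hz: "htil h M.zer = N.Jzero"
  proof (rule N.F_ext)
    show "htil h M.zer \<in> N.F" using htil_F[OF h] by simp
    show "N.Jzero \<in> N.F" by (rule N.Jzero_F)
    fix b assume "b \<in> N.eAv"
    thus "htil h M.zer b = N.Jzero b" by (simp add: htil_def N.Jzero_eq homZ_zero[OF h] eA_CQ)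
  qed
  show "represents_delta n m v M N E0 (psi h)"
    unfolding represents_delta_def
  proof (intro bexI conjI ballI)
    show "g \<in> hom n E0 (Jmod n m v N)"
      unfolding hom_def
    proof (intro CollectI conjI ballI subsetI)
      show "g \<in> extensional (mcar E0)" by (simp add: g_def E0_def)
    next
      fix y assume "y \<in> g ` mcar E0"
      thus "y \<in> N.JC" using N.Jadd_JC N.uJ_JC htil_JC[OF h] by (auto simp: g_def E0_def)
    next
      fix p q assume p: "p \<in> mcar E0" and q: "q \<in> mcar E0"
      obtain a b c d where pq: "p = (a, b)" "q = (c, d)" "a \<in> N.C" "b \<in> M.C" "c \<in> N.C" "d \<in> M.C"
        using p q by (auto simp: E0_def)
      have u: "N.uJ a \<in> N.F" "N.uJ c \<in> N.F" "htil h b \<in> N.F" "htil h d \<in> N.F"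
        using pq htil_F[OF h] N.uJ_F by auto
      have "N.Jadd (N.Jadd (N.uJ a) (N.uJ c)) (N.Jadd (htil h b) (htil h d)) =
            N.Jadd (N.Jadd (N.uJ a) (htil h b)) (N.Jadd (N.uJ c) (htil h d))"
        using u by (metis N.F_assoc N.F_comm N.Jadd_F)
      thus "g (madd E0 p q) = madd (Jmod n m v N) (g p) (g q)"
        using pq by (simp add: g_def E0_def N.uJ_add htil_add[OF h])
    next
      fix a p assume a: "a \<in> CQ n" and p: "p \<in> mcar E0"
      obtain x y where pq: "p = (x, y)" "x \<in> N.C" "y \<in> M.C" using p by (auto simp: E0_def)
      show "g (mact E0 a p) = mact (Jmod n m v N) a (g p)"
        using pq a htil_F[OF h] N.uJ_F
        by (simp add: g_def E0_def N.Jact_add N.Jact_uJ htil_act[OF h])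
    qed
    fix x assume x: "x \<in> N.C"
    show "g (x, mzero M) = unitJ n v N x"
      using x hz N.F_rzero N.uJ_F by (simp add: g_def)
    fix y assume y: "y \<in> M.C"
    have "g (x, y) = N.Jadd (htil h y) (N.uJ x)"
      using x y N.F_comm htil_F[OF h] N.uJ_F by (simp add: g_def)
    thus "g (x, y) \<in> psi h y" using x y by (auto simp: psi_def coset_def)
  qed
qed

lemma image_sup:
  assumes f: "f \<in> hom n M N.Om" and E: "is_ext n m M N E" and rd: "represents_delta n m v M N E f"
    and sp: "ext_splits n M N E"
  shows "f \<in> psi ` homZ n v M N"
proof -
  obtain g where g: "g \<in> hom n E (Jmod n m v N)" "\<forall>x\<in>N.C. \<forall>y\<in>M.C. g (x, y) \<in> f y"
    using rd unfolding represents_delta_def by blast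
  obtain s where s: "s \<in> hom n M E" "\<forall>y\<in>M.C. ext_proj M N (s y) = y" using sp unfolding ext_splits_def by blast
  have Ec: "mcar E = N.C \<times> M.C" using E by (simp add: is_ext_def)
  have sy: "s y \<in> N.C \<times> M.C" "snd (s y) = y" if "y \<in> M.C" for y
  proof -
    show c: "s y \<in> N.C \<times> M.C" using s(1) that Ec by (auto simp: hom_def)
    have "ext_proj M N (s y) = y" using s(2) that by blast
    thus "snd (s y) = y" using c by (simp add: ext_proj_def)
  qed
  define G where "G y = g (s y)" for y
  have GJ: "G y \<in> N.JC" if "y \<in> M.C" for y using sy[OF that] g(1) Ec by (auto simp: G_def hom_def)
  have Gadd: "G (M.add x y) = N.Jadd (G x) (G y)" if "x \<in> M.C" "y \<in> M.C" for x y
  proof -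
    have "s (M.add x y) = madd E (s x) (s y)" using s(1) that by (simp add: hom_def)
    moreover have "s x \<in> mcar E" "s y \<in> mcar E" using sy that Ec by auto
    ultimately show ?thesis using g(1) by (simp add: G_def hom_def)
  qed
  have Gact: "G (M.act a y) = N.Jact a (G y)" if "a \<in> CQ n" "y \<in> M.C" for a y
  proof -
    have "s (M.act a y) = mact E a (s y)" using s(1) that by (simp add: hom_def)
    moreover have "s y \<in> mcar E" using sy that Ec by auto
    ultimately show ?thesis using g(1) that by (simp add: G_def hom_def)
  qed
  have evA: "ev v \<in> N.eAv" using ev_eA[OF M.npos M.v0 M.vn] .
  have evq: "ev v \<in> CQ n" using ev_CQ M.v0 M.vn by blast
  have JCD: "\<phi> b \<in> eV N v" "\<forall>z. \<forall>b\<in>N.eAv. \<phi> (qmul n (zelt n z) b) = N.act (zelt n z) (\<phi> b)"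
    if "\<phi> \<in> N.JC" "b \<in> N.eAv" for \<phi> b using that unfolding N.JC_eq by auto
  define h where "h = restrict (\<lambda>x. G x (ev v)) (eV M v)"
  have hZ: "h \<in> homZ n v M N"
    unfolding homZ_def
  proof (intro CollectI conjI ballI allI subsetI)
    show "h \<in> extensional (eV M v)" by (simp add: h_def)
  next
    fix y assume "y \<in> h ` eV M v"
    thus "y \<in> eV N v" using GJ JCD(1) evA M.eV_sub by (auto simp: h_def)
  next
    fix x y assume x: "x \<in> eV M v" and y: "y \<in> eV M v"
    have "x \<in> M.C" "y \<in> M.C" using x y M.eV_sub by auto
    thus "h (M.add x y) = N.add (h x) (h y)"
      using x y M.eV_add Gadd evA by (simp add: h_def N.Jadd_eq)
  next
    fix z x assume x: "x \<in> eV M v"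
    have xc: "x \<in> M.C" using x M.eV_sub by auto
    have "G (M.act (zelt n z) x) (ev v) = G x (qmul n (ev v) (zelt n z))"
      using Gact[OF zelt_CQ xc] evA by (simp add: N.Jact_eq)
    also have "\<dots> = G x (qmul n (zelt n z) (ev v))" using zelt_ev_comm[OF M.npos M.v0 M.vn] by simp
    also have "\<dots> = N.act (zelt n z) (G x (ev v))" using JCD(2)[OF GJ[OF xc] evA] evA by blast
    finally show "h (M.act (zelt n z) x) = N.act (zelt n z) (h x)"
      using x M.eV_zelt by (simp add: h_def)
  qed
  have ht: "htil h y = G y" if y: "y \<in> M.C" for y
  proof (rule N.F_ext)
    show "htil h y \<in> N.F" using htil_F hZ y by blast
    show "G y \<in> N.F" using GJ y N.JC_F by blast
    fix b assume b: "b \<in> N.eAv"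
    have bq: "b \<in> CQ n" using b by (rule eA_CQ)
    have "htil h y b = G (M.act b y) (ev v)" using b M.eV_act[OF b y] by (simp add: htil_def h_def)
    also have "\<dots> = G y (qmul n (ev v) b)" using Gact[OF bq y] evA by (simp add: N.Jact_eq)
    also have "\<dots> = G y b" using qmul_ev_eA[OF b] by simp
    finally show "htil h y b = G y b" .
  qed
  have "psi h = f"
  proof (rule extensionalityI)
    show "psi h \<in> extensional M.C" by (simp add: psi_def)
    show "f \<in> extensional M.C" using f by (simp add: hom_def)
    fix y assume y: "y \<in> M.C"
    obtain \<phi> where ph: "\<phi> \<in> N.JC" "f y = N.cs \<phi>" using f y by (auto simp: hom_def N.Om_car)
    have "s y = (fst (s y), y)" using sy[OF y] by (metis prod.collapse)
    hence "G y \<in> f y" using g(2) sy[OF y] y by (metis G_def mem_Times_iff)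
    hence "N.cs (G y) = f y" using ph N.cs_eq_mem N.JC_F by blast
    thus "psi h y = f y" using y ht by (simp add: psi_def)
  qed
  thus ?thesis using hZ by blast
qed

end




lemma map2_add_diff: "length zs = length zs' \<Longrightarrow> map2 (+) zs' (map2 (-) zs zs') = (zs :: 'a::ab_group_add list)"
proof (induction zs arbitrary: zs')
  case Nil thus ?case by simp
next
  case (Cons z zs) thus ?case by (cases zs') auto
qed

lemma map2_diff_zero: "length zs = length zs' \<Longrightarrow> (\<forall>d\<in>set (map2 (-) zs zs'). d = 0) \<Longrightarrow> zs = (zs' :: 'a::ab_group_add list)"
proof (induction zs arbitrary: zs')
  case Nil thus ?case by simp
next
  case (Cons z zs) thus ?case by (cases zs') auto
qed

locale extctx = twoctx n m M v N for n m :: nat and M :: "'m amod" and v :: int and N :: "'k amod" +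
  fixes E :: "('k \<times> 'm) amod"
  assumes ext: "is_ext n m M N E" and zfM: "Z_free n M"
begin

sublocale E: amodule n m E using ext M.npos by unfold_locales (simp_all add: is_ext_def)

lemma Ec: "mcar E = N.C \<times> M.C" using ext by (simp add: is_ext_def)
lemma EcD: assumes "p \<in> mcar E" shows "fst p \<in> N.C" "snd p \<in> M.C"
proof -
  have "p \<in> N.C \<times> M.C" using assms by (simp only: Ec)
  thus "fst p \<in> N.C" "snd p \<in> M.C" by (simp_all add: mem_Times_iff)
qed

lemma EcI: "x \<in> N.C \<Longrightarrow> y \<in> M.C \<Longrightarrow> (x, y) \<in> mcar E"
  by (simp only: Ec mem_Times_iff fst_conv snd_conv)

lemma inc_hom: "ext_inc M N \<in> hom n N E" using ext by (simp add: is_ext_def)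
lemma proj_hom: "ext_proj M N \<in> hom n E M" using ext by (simp add: is_ext_def)

lemma Ezero: "mzero E = (N.zer, M.zer)"
  using hom_zero_pres[OF N.amodule_axioms E.amodule_axioms inc_hom] by (simp add: ext_inc_def)

lemma incadd: "x \<in> N.C \<Longrightarrow> y \<in> N.C \<Longrightarrow> madd E (x, M.zer) (y, M.zer) = (N.add x y, M.zer)"
  using inc_hom unfolding hom_def ext_inc_def by auto

lemma incact: "a \<in> CQ n \<Longrightarrow> x \<in> N.C \<Longrightarrow> mact E a (x, M.zer) = (N.act a x, M.zer)"
  using inc_hom unfolding hom_def ext_inc_def by auto

lemma sndadd: "p \<in> mcar E \<Longrightarrow> q \<in> mcar E \<Longrightarrow> snd (madd E p q) = M.add (snd p) (snd q)"
  using proj_hom E.add_closed unfolding hom_def ext_proj_def Ec by (simp add: Ec[symmetric])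

lemma sndact: "a \<in> CQ n \<Longrightarrow> p \<in> mcar E \<Longrightarrow> snd (mact E a p) = M.act a (snd p)"
  using proj_hom E.act_closed unfolding hom_def ext_proj_def Ec by (simp add: Ec[symmetric])

lemma decomp: assumes p: "p \<in> mcar E" and q: "q \<in> mcar E" and e: "snd p = snd q"
  shows "\<exists>x\<in>N.C. p = madd E (x, M.zer) q"
proof -
  obtain w where w: "w \<in> mcar E" "madd E q w = mzero E" using E.neg_ex q by blast
  have s: "snd (madd E p w) = M.zer"
    using sndadd[OF p w(1)] sndadd[OF q w(1)] w(2) e Ezero by simp
  have pw: "madd E p w \<in> mcar E" using p w by simp
  then obtain x where x: "x \<in> N.C" "madd E p w = (x, M.zer)" using s Ec by (cases "madd E p w") auto
  have "p = madd E p (madd E w q)" using w p q by (simp add: E.add_comm)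
  also have "\<dots> = madd E (madd E p w) q" using p q w by (simp add: E.add_assoc)
  finally show ?thesis using x by auto
qed

definition bs :: "'m list" where
  "bs = (SOME bs. distinct bs \<and> set bs \<subseteq> M.C \<and> (\<forall>x\<in>M.C. \<exists>zs. length zs = length bs \<and> x = M.comb zs bs) \<and>
     (\<forall>zs. length zs = length bs \<and> M.comb zs bs = M.zer \<longrightarrow> (\<forall>z\<in>set zs. z = 0)))"

lemma bs_props: "set bs \<subseteq> M.C" "\<forall>x\<in>M.C. \<exists>zs. length zs = length bs \<and> x = M.comb zs bs"
  "\<forall>zs. length zs = length bs \<and> M.comb zs bs = M.zer \<longrightarrow> (\<forall>z\<in>set zs. z = 0)"
proof -
  have "\<exists>bs. distinct bs \<and> set bs \<subseteq> M.C \<and> (\<forall>x\<in>M.C. \<exists>zs. length zs = length bs \<and> x = M.comb zs bs) \<and>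
     (\<forall>zs. length zs = length bs \<and> M.comb zs bs = M.zer \<longrightarrow> (\<forall>z\<in>set zs. z = 0))"
    using zfM unfolding Z_free_def M.comb_def by blast
  from someI_ex[OF this] show "set bs \<subseteq> M.C" "\<forall>x\<in>M.C. \<exists>zs. length zs = length bs \<and> x = M.comb zs bs"
    "\<forall>zs. length zs = length bs \<and> M.comb zs bs = M.zer \<longrightarrow> (\<forall>z\<in>set zs. z = 0)"
    unfolding bs_def by blast+
qed

lemma comb_uniq: assumes l: "length zs = length bs" "length zs' = length bs" and e: "M.comb zs bs = M.comb zs' bs"
  shows "zs = zs'"
proof -
  let ?d = "map2 (-) zs zs'"
  have ld: "length ?d = length bs" using l by simp
  have "M.comb zs bs = M.add (M.comb zs' bs) (M.comb ?d bs)"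
    using M.comb_add[OF bs_props(1) l(2) ld] map2_add_diff[of zs zs'] l by simp
  hence "M.add (M.comb zs' bs) (M.comb ?d bs) = M.add (M.comb zs' bs) M.zer"
    using e bs_props(1) by simp
  hence "M.comb ?d bs = M.zer" using M.cancel[of "M.comb zs' bs" "M.comb ?d bs" M.zer] bs_props(1) by simp
  hence "\<forall>d\<in>set ?d. d = 0" using bs_props(3) ld by blast
  thus ?thesis using map2_diff_zero[of zs zs'] l by argo
qed

definition coef :: "'m \<Rightarrow> complex fps list" where
  "coef y = (SOME zs. length zs = length bs \<and> y = M.comb zs bs)"

lemma coef: assumes "y \<in> M.C" shows "length (coef y) = length bs \<and> y = M.comb (coef y) bs"
proof -
  have "\<exists>zs. length zs = length bs \<and> y = M.comb zs bs" using bs_props(2) assms by blast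
  thus ?thesis unfolding coef_def by (rule someI_ex)
qed

lemma coef_eq: "length zs = length bs \<Longrightarrow> y = M.comb zs bs \<Longrightarrow> coef y = zs"
  using coef comb_uniq M.comb_closed bs_props(1) by metis

definition lifts :: "('k \<times> 'm) list" where "lifts = map (\<lambda>b. (N.zer, b)) bs"

lemma lifts_C: "set lifts \<subseteq> mcar E" using bs_props(1) by (auto simp: lifts_def Ec)

definition sig :: "'m \<Rightarrow> 'k \<times> 'm" where "sig y = E.comb (coef y) lifts"

lemma sig_C: "sig y \<in> mcar E" using lifts_C by (simp add: sig_def)

lemma sig_snd: assumes "y \<in> M.C" shows "snd (sig y) = y"
proof -
  have "ext_proj M N (sig y) = M.comb (coef y) (map (ext_proj M N) lifts)"
    unfolding sig_def by (rule comb_hom[OF E.amodule_axioms M.amodule_axioms proj_hom lifts_C])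
  also have "map (ext_proj M N) lifts = bs" unfolding lifts_def map_map
    by (rule map_idI) (use bs_props(1) in \<open>auto simp: ext_proj_def\<close>)
  finally show ?thesis using coef[OF assms] sig_C by (simp add: ext_proj_def Ec)
qed

lemma sig_add: assumes "x \<in> M.C" "y \<in> M.C" shows "sig (M.add x y) = madd E (sig x) (sig y)"
proof -
  have lx: "length (coef x) = length lifts" "length (coef y) = length lifts"
    using coef assms by (auto simp: lifts_def)
  have "coef (M.add x y) = map2 (+) (coef x) (coef y)"
    using coef assms M.comb_add[OF bs_props(1)] by (intro coef_eq) (auto simp: lifts_def)
  thus ?thesis using E.comb_add[OF lifts_C lx] by (simp add: sig_def)
qed

lemma sig_zelt: assumes "y \<in> M.C" shows "sig (M.act (zelt n c) y) = mact E (zelt n c) (sig y)"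
proof -
  have "coef (M.act (zelt n c) y) = map (\<lambda>z. c * z) (coef y)"
    using coef assms M.comb_scale[OF bs_props(1)] by (intro coef_eq) auto
  thus ?thesis using E.comb_scale[OF lifts_C] by (simp add: sig_def)
qed

lemma sig_zero: "sig M.zer = mzero E"
proof -
  have "madd E (sig M.zer) (sig M.zer) = sig M.zer" using sig_add[of M.zer M.zer] by simp
  thus ?thesis using E.zero_unique sig_C by blast
qed

definition rho :: "'k \<times> 'm \<Rightarrow> 'k" where
  "rho p = (THE x. x \<in> N.C \<and> p = madd E (x, M.zer) (sig (snd p)))"

lemma rho_uniq0: assumes "x \<in> N.C" "x' \<in> N.C" "madd E (x, M.zer) q = madd E (x', M.zer) q" "q \<in> mcar E"
  shows "x = x'"
proof -
  have c: "(x, M.zer) \<in> mcar E" "(x', M.zer) \<in> mcar E" using assms EcI by auto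
  have "madd E q (x, M.zer) = madd E q (x', M.zer)"
    using assms(3) E.add_comm[OF c(1) assms(4)] E.add_comm[OF c(2) assms(4)] by argo
  hence "(x, M.zer) = (x', M.zer)" using E.cancel[OF assms(4) c(1) c(2)] by blast
  thus ?thesis by simp
qed

lemma rho: assumes p: "p \<in> mcar E" shows "rho p \<in> N.C \<and> p = madd E (rho p, M.zer) (sig (snd p))"
proof -
  have sp: "snd p \<in> M.C" using EcD[OF p] by simp
  have ex: "\<exists>x\<in>N.C. p = madd E (x, M.zer) (sig (snd p))"
    by (rule decomp[OF p sig_C sym[OF sig_snd[OF sp]]])
  obtain x where x: "x \<in> N.C" and xe: "p = madd E (x, M.zer) (sig (snd p))"
    by (rule bexE[OF ex])
  have "rho p = x" unfolding rho_def
  proof (rule the_equality)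
    show "x \<in> N.C \<and> p = madd E (x, M.zer) (sig (snd p))" by (rule conjI[OF x xe])
    fix y assume y: "y \<in> N.C \<and> p = madd E (y, M.zer) (sig (snd p))"
    have e: "madd E (y, M.zer) (sig (snd p)) = madd E (x, M.zer) (sig (snd p))"
      using trans[OF sym[OF conjunct2[OF y]] xe] .
    show "y = x" by (rule rho_uniq0[OF conjunct1[OF y] x e sig_C])
  qed
  hence "x = rho p" by (rule sym)
  thus ?thesis using conjI[OF x xe] by (rule subst)
qed

lemma rho_eq: assumes "p \<in> mcar E" "x \<in> N.C" "p = madd E (x, M.zer) (sig (snd p))" shows "rho p = x"
proof -
  have e: "madd E (rho p, M.zer) (sig (snd p)) = madd E (x, M.zer) (sig (snd p))"
    using trans[OF sym[OF conjunct2[OF rho[OF assms(1)]]] assms(3)] .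
  show ?thesis by (rule rho_uniq0[OF conjunct1[OF rho[OF assms(1)]] assms(2) e sig_C])
qed

lemma rho_add: assumes p: "p \<in> mcar E" and q: "q \<in> mcar E"
  shows "rho (madd E p q) = N.add (rho p) (rho q)"
proof (rule rho_eq)
  show "madd E p q \<in> mcar E" using p q by simp
  have rp: "rho p \<in> N.C" "rho q \<in> N.C" using conjunct1[OF rho[OF p]] conjunct1[OF rho[OF q]] .
  thus "N.add (rho p) (rho q) \<in> N.C" by simp
  have sp: "snd p \<in> M.C" "snd q \<in> M.C" using EcD p q by auto
  let ?a = "(rho p, M.zer)" and ?b = "(rho q, M.zer)" and ?c = "sig (snd p)" and ?d = "sig (snd q)"
  have cl: "?a \<in> mcar E" "?b \<in> mcar E" "?c \<in> mcar E" "?d \<in> mcar E" using rp sig_C EcI by auto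
  have hp: "p = madd E ?a ?c" using conjunct2[OF rho[OF p]] .
  have hq: "q = madd E ?b ?d" using conjunct2[OF rho[OF q]] .
  have "madd E p q = madd E (madd E ?a ?c) (madd E ?b ?d)" using arg_cong2[OF hp hq, of "madd E"] .
  also have "\<dots> = madd E (madd E ?a ?b) (madd E ?c ?d)" using cl
    by (metis E.add_assoc E.add_closed E.add_left_comm)
  also have "madd E ?a ?b = (N.add (rho p) (rho q), M.zer)" using incadd rp by simp
  also have "madd E ?c ?d = sig (snd (madd E p q))" using sig_add sp sndadd p q by simp
  finally show "madd E p q = madd E (N.add (rho p) (rho q), M.zer) (sig (snd (madd E p q)))" .
qed

lemma rho_zelt: assumes p: "p \<in> mcar E"
  shows "rho (mact E (zelt n c) p) = N.act (zelt n c) (rho p)"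
proof (rule rho_eq)
  show "mact E (zelt n c) p \<in> mcar E" using p by (simp add: zelt_CQ)
  have rp: "rho p \<in> N.C" using conjunct1[OF rho[OF p]] .
  thus "N.act (zelt n c) (rho p) \<in> N.C" by (simp add: zelt_CQ)
  have sp: "snd p \<in> M.C" using EcD[OF p] by simp
  have cl: "(rho p, M.zer) \<in> mcar E" using rp EcI by auto
  have hp: "p = madd E (rho p, M.zer) (sig (snd p))" using conjunct2[OF rho[OF p]] .
  have "mact E (zelt n c) p = mact E (zelt n c) (madd E (rho p, M.zer) (sig (snd p)))"
    using arg_cong[OF hp, of "mact E (zelt n c)"] .
  also have "\<dots> = madd E (mact E (zelt n c) (rho p, M.zer)) (mact E (zelt n c) (sig (snd p)))"
    using cl sig_C by (simp add: E.act_add zelt_CQ)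
  also have "mact E (zelt n c) (rho p, M.zer) = (N.act (zelt n c) (rho p), M.zer)" using incact rp zelt_CQ by simp
  also have "mact E (zelt n c) (sig (snd p)) = sig (snd (mact E (zelt n c) p))"
    using sig_zelt sp sndact p zelt_CQ by simp
  finally show "mact E (zelt n c) p = madd E (N.act (zelt n c) (rho p), M.zer) (sig (snd (mact E (zelt n c) p)))" .
qed

lemma rho_inc: assumes "x \<in> N.C" shows "rho (x, M.zer) = x"
proof (rule rho_eq)
  show "(x, M.zer) \<in> mcar E" using assms EcI by auto
  show "x \<in> N.C" by fact
  show "(x, M.zer) = madd E (x, M.zer) (sig (snd (x, M.zer)))"
    using sig_zero assms EcI by simp
qed

lemma rho_zero: "rho (mzero E) = N.zer" using rho_inc Ezero by simp

end




context extctx begin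

definition gE :: "'k \<times> 'm \<Rightarrow> (qel \<Rightarrow> 'k)" where
  "gE p = restrict (\<lambda>b. N.act (ev v) (rho (mact E b p))) (eA n v)"

definition G :: "'k \<times> 'm \<Rightarrow> (qel \<Rightarrow> 'k)" where "G = restrict gE (mcar E)"

lemma evq: "ev v \<in> CQ n" using ev_CQ M.v0 M.vn by blast

lemma rhoC: "p \<in> mcar E \<Longrightarrow> rho p \<in> N.C" using rho by blast

lemma gE_JC: assumes p: "p \<in> mcar E" shows "gE p \<in> N.JC"
  unfolding N.JC_eq
proof (intro CollectI conjI ballI allI)
  show "gE p \<in> extensional N.eAv" by (simp add: gE_def)
  show "gE p ` N.eAv \<subseteq> eV N v"
  proof
    fix z assume "z \<in> gE p ` N.eAv"
    then obtain b where b: "b \<in> N.eAv" "z = gE p b" by blast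
    have "mact E b p \<in> mcar E" using p eA_CQ[OF b(1)] by simp
    hence "rho (mact E b p) \<in> N.C" by (rule rhoC)
    thus "z \<in> eV N v" using b by (simp add: gE_def eV_def)
  qed
  fix b assume b: "b \<in> N.eAv"
  have bq: "b \<in> CQ n" using b by (rule eA_CQ)
  have bp: "mact E b p \<in> mcar E" using bq p by simp
  { fix c assume c: "c \<in> N.eAv"
    have cq: "c \<in> CQ n" using c by (rule eA_CQ)
    have cp: "mact E c p \<in> mcar E" using cq p by simp
    show "gE p (qadd b c) = N.add (gE p b) (gE p c)"
      using b c bq cq p bp cp eA_qadd[OF b c]
      by (simp add: gE_def E.act_qadd rho_add N.act_add evq rhoC) }
  { fix z
    have "rho (mact E (qmul n (zelt n z) b) p) = N.act (zelt n z) (rho (mact E b p))"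
      using bq p bp by (simp add: E.act_qmul zelt_CQ rho_zelt)
    thus "gE p (qmul n (zelt n z) b) = N.act (zelt n z) (gE p b)"
      using b zelt_eA[OF b] N.ev_zelt_comm rhoC[OF bp] by (simp add: gE_def) }
next
  fix b assume "b \<in> N.eAv \<inter> Ibar n m"
  thus "gE p b = N.zer" using p by (simp add: gE_def E.act_Ibar rho_zero evq)
qed

lemma gE_F: "p \<in> mcar E \<Longrightarrow> gE p \<in> N.F" using gE_JC N.JC_F by blast

lemma G_hom: "G \<in> hom n E (Jmod n m v N)"
  unfolding hom_def
proof (intro CollectI conjI ballI subsetI)
  show "G \<in> extensional (mcar E)" by (simp add: G_def)
next
  fix y assume "y \<in> G ` mcar E" thus "y \<in> N.JC" using gE_JC by (auto simp: G_def)
next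
  fix p q assume p: "p \<in> mcar E" and q: "q \<in> mcar E"
  have "gE (madd E p q) = N.Jadd (gE p) (gE q)"
  proof (rule N.F_ext)
    show "gE (madd E p q) \<in> N.F" using p q gE_F by simp
    show "N.Jadd (gE p) (gE q) \<in> N.F" using p q gE_F N.Jadd_F by simp
    fix b assume b: "b \<in> N.eAv"
    have bq: "b \<in> CQ n" using b by (rule eA_CQ)
    show "gE (madd E p q) b = N.Jadd (gE p) (gE q) b"
      using b bq p q by (simp add: gE_def N.Jadd_eq E.act_add rho_add N.act_add evq rhoC)
  qed
  thus "G (madd E p q) = madd (Jmod n m v N) (G p) (G q)" using p q by (simp add: G_def)
next
  fix a p assume a: "a \<in> CQ n" and p: "p \<in> mcar E"
  have "gE (mact E a p) = N.Jact a (gE p)"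
  proof (rule N.F_ext)
    show "gE (mact E a p) \<in> N.F" using p a gE_F by simp
    show "N.Jact a (gE p) \<in> N.F" using p a gE_F N.Jact_F by simp
    fix b assume b: "b \<in> N.eAv"
    have bq: "b \<in> CQ n" using b by (rule eA_CQ)
    show "gE (mact E a p) b = N.Jact a (gE p) b"
      using b bq p a by (simp add: gE_def N.Jact_eq E.act_qmul qmul_right_eA)
  qed
  thus "G (mact E a p) = mact (Jmod n m v N) a (G p)" using p a by (simp add: G_def)
qed

lemma G_JC: "p \<in> mcar E \<Longrightarrow> G p \<in> N.JC" using gE_JC by (simp add: G_def)
lemma G_F: "p \<in> mcar E \<Longrightarrow> G p \<in> N.F" using G_JC N.JC_F by blast

lemma G_add: "p \<in> mcar E \<Longrightarrow> q \<in> mcar E \<Longrightarrow> G (madd E p q) = N.Jadd (G p) (G q)"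
  using G_hom by (simp add: hom_def)
lemma G_act: "a \<in> CQ n \<Longrightarrow> p \<in> mcar E \<Longrightarrow> G (mact E a p) = N.Jact a (G p)"
  using G_hom by (simp add: hom_def)

lemma G_inc: assumes x: "x \<in> N.C" shows "G (x, M.zer) = N.uJ x"
proof -
  have xe: "(x, M.zer) \<in> mcar E" using x EcI by simp
  have "gE (x, M.zer) = N.uJ x"
  proof (rule N.F_ext)
    show "gE (x, M.zer) \<in> N.F" using gE_F xe by simp
    show "N.uJ x \<in> N.F" using x N.uJ_F by simp
    fix b assume b: "b \<in> N.eAv"
    have bq: "b \<in> CQ n" using b by (rule eA_CQ)
    have "rho (mact E b (x, M.zer)) = N.act b x" using incact[OF bq x] rho_inc bq x by simp
    thus "gE (x, M.zer) b = N.uJ x b"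
      using b N.eV_ev[OF N.eV_act[OF b x]] by (simp add: gE_def N.uJ_eq)
  qed
  thus ?thesis using xe by (simp add: G_def)
qed

lemma G_dec: assumes p: "p \<in> mcar E"
  shows "\<exists>x\<in>N.C. G p = N.Jadd (G (N.zer, snd p)) (N.uJ x)"
proof -
  have q: "(N.zer, snd p) \<in> mcar E" using EcD[OF p] EcI by simp
  have ex: "\<exists>x\<in>N.C. p = madd E (x, M.zer) (N.zer, snd p)" using decomp[OF p q] by simp
  obtain x where x: "x \<in> N.C" and xe: "p = madd E (x, M.zer) (N.zer, snd p)" by (rule bexE[OF ex])
  have xc: "(x, M.zer) \<in> mcar E" using x EcI by simp
  have "G p = N.Jadd (G (x, M.zer)) (G (N.zer, snd p))"
    using arg_cong[OF xe, of G] G_add[OF xc q] by simp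
  also have "\<dots> = N.Jadd (G (N.zer, snd p)) (N.uJ x)"
    using G_inc[OF x] N.F_comm G_F[OF q] N.uJ_F[OF x] by simp
  finally show ?thesis using x by blast
qed

lemma G_cs: assumes p: "p \<in> mcar E" shows "N.cs (G p) = N.cs (G (N.zer, snd p))"
proof -
  have q: "(N.zer, snd p) \<in> mcar E" using EcD[OF p] EcI by simp
  obtain x where x: "x \<in> N.C" "G p = N.Jadd (G (N.zer, snd p)) (N.uJ x)" using G_dec[OF p] by blast
  show ?thesis using x N.cs_shift[OF G_F[OF q]] by simp
qed

lemma G_mem: assumes p: "p \<in> mcar E" shows "G p \<in> N.cs (G (N.zer, snd p))"
proof -
  obtain x where x: "x \<in> N.C" "G p = N.Jadd (G (N.zer, snd p)) (N.uJ x)" using G_dec[OF p] by blast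
  thus ?thesis by (auto simp: coset_def)
qed

definition fE :: "'m \<Rightarrow> (qel \<Rightarrow> 'k) set" where
  "fE = restrict (\<lambda>y. N.cs (G (N.zer, y))) M.C"

lemma ext_delta: "\<exists>f\<in>hom n M N.Om. represents_delta n m v M N E f"
proof (rule bexI)
  show "represents_delta n m v M N E fE"
    unfolding represents_delta_def
  proof (intro bexI conjI ballI)
    show "G \<in> hom n E (Jmod n m v N)" by (rule G_hom)
    fix x assume x: "x \<in> N.C"
    show "G (x, mzero M) = unitJ n v N x" using G_inc[OF x] by simp
    fix y assume y: "y \<in> M.C"
    have "(x, y) \<in> mcar E" using x y EcI by simp
    thus "G (x, y) \<in> fE y" using G_mem[of "(x, y)"] y by (simp add: fE_def)
  qed
  show "fE \<in> hom n M N.Om"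
    unfolding hom_def
  proof (intro CollectI conjI ballI subsetI)
    show "fE \<in> extensional M.C" by (simp add: fE_def)
  next
    fix z assume "z \<in> fE ` M.C"
    thus "z \<in> mcar N.Om" using G_JC EcI by (auto simp: fE_def N.Om_car)
  next
    fix y y' assume y: "y \<in> M.C" and y': "y' \<in> M.C"
    have c: "(N.zer, y) \<in> mcar E" "(N.zer, y') \<in> mcar E" using y y' EcI by auto
    have "madd N.Om (fE y) (fE y') = N.cs (G (madd E (N.zer, y) (N.zer, y')))"
      using y y' c by (simp add: fE_def N.Om_add G_F G_add)
    also have "\<dots> = N.cs (G (N.zer, M.add y y'))" using G_cs[of "madd E (N.zer, y) (N.zer, y')"] c sndadd by simp
    finally show "fE (M.add y y') = madd N.Om (fE y) (fE y')" using y y' by (simp add: fE_def)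
  next
    fix a y assume a: "a \<in> CQ n" and y: "y \<in> M.C"
    have c: "(N.zer, y) \<in> mcar E" using y EcI by auto
    have "mact N.Om a (fE y) = N.cs (G (mact E a (N.zer, y)))"
      using y c a by (simp add: fE_def N.Om_act G_F G_act)
    also have "\<dots> = N.cs (G (N.zer, M.act a y))" using G_cs[of "mact E a (N.zer, y)"] c a sndact by simp
    finally show "fE (M.act a y) = mact N.Om a (fE y)" using y a by (simp add: fE_def)
  qed
qed

end


theorem mainTheorem4:
  fixes n m :: nat and v :: int
    and M :: "'m amod" and N :: "'k amod"
  assumes "1 \<le> m" and "m < n"
    and "0 \<le> v" and "v < int n"
    and "CM n m M" and "CM n m N"
  shows "\<exists>\<psi>.
     (\<forall>h\<in>homZ n v M N. \<psi> h \<in> hom n M (omega n m v N)) \<and>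
     (\<forall>c. \<forall>h\<in>homZ n v M N. \<forall>h'\<in>homZ n v M N.
        \<psi> (homZ_lc n v M N c h h') = hom_lc n M (omega n m v N) c (\<psi> h) (\<psi> h')) \<and>
     {h \<in> homZ n v M N. \<psi> h = hom_zero M (omega n m v N)} = resv v M ` hom n M N \<and>
     \<psi> ` homZ n v M N =
       {f \<in> hom n M (omega n m v N).
          \<exists>E. is_ext n m M N E \<and> represents_delta n m v M N E f \<and> ext_splits n M N E} \<and>
     (\<forall>E. is_ext n m M N E \<longrightarrow> (\<exists>f\<in>hom n M (omega n m v N). represents_delta n m v M N E f))"
proof -
  have mM: "is_mod n m M" and mN: "is_mod n m N" and zfM: "Z_free n M" and zfN: "Z_free n N"
    using assms(5,6) by (auto simp: CM_def)
  have npos: "0 < n" using assms(2) by simp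
  interpret T: twoctx n m M v N
    by unfold_locales (use mM mN npos assms(3,4) in auto)
  show ?thesis
  proof (intro exI[of _ T.psi] conjI ballI allI impI)
    fix h assume "h \<in> homZ n v M N"
    thus "T.psi h \<in> hom n M (omega n m v N)" by (rule T.psi_hom)
  next
    fix c h h' assume "h \<in> homZ n v M N" "h' \<in> homZ n v M N"
    thus "T.psi (homZ_lc n v M N c h h') = hom_lc n M (omega n m v N) c (T.psi h) (T.psi h')"
      by (rule T.psi_lc)
  next
    show "{h \<in> homZ n v M N. T.psi h = hom_zero M (omega n m v N)} = resv v M ` hom n M N"
      by (rule T.kernel[OF zfN])
  next
    show "T.psi ` homZ n v M N = {f \<in> hom n M (omega n m v N).
          \<exists>E. is_ext n m M N E \<and> represents_delta n m v M N E f \<and> ext_splits n M N E}"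
    proof
      show "T.psi ` homZ n v M N \<subseteq> {f \<in> hom n M (omega n m v N).
          \<exists>E. is_ext n m M N E \<and> represents_delta n m v M N E f \<and> ext_splits n M N E}"
        using T.psi_hom T.image_sub by blast
      show "{f \<in> hom n M (omega n m v N).
          \<exists>E. is_ext n m M N E \<and> represents_delta n m v M N E f \<and> ext_splits n M N E} \<subseteq> T.psi ` homZ n v M N"
        using T.image_sup by blast
    qed
  next
    fix E assume E: "is_ext n m M N E"
    interpret X: extctx n m M v N E
      by unfold_locales (use E zfM in auto)
    show "\<exists>f\<in>hom n M (omega n m v N). represents_delta n m v M N E f" by (rule X.ext_delta)
  qed
qed

end
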